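(* For every $n\ge1$, $\mathcal T_{n+}$ is open in $(X_d^{(c)})^n$.
   Context: Let $d\ge2$. $E_{d+1}=\mathbb R^{d+1}$, $E^{(c)}_{d+1}=\mathbb C^{d+1}$ with bilinear form $(x,y)=x^0y^0+x^dy^d-\sum_{j=1}^{d-1}x^jy^j$. $X_d=\{x\in E_{d+1}:(x,x)=1\}$, $X_d^{(c)}=\{z\in E^{(c)}_{d+1}:(z,z)=1\}$. $G_0^{(c)}$ is the identity component of the complex group preserving the form; $\exp$ is the matrix exponential; $\ell(a\wedge b)x=a(b,x)-b(a,x)$. $\mathcal C_1=\{\ell(a\wedge b):a,b\in E_{d+1},(a,a)=(b,b)=1,(a,b)=0,a^0b^d-a^db^0>0\}$, $\mathcal C_+=\bigcup_{\rho>0}\rho\,\mathcal C_1$. $G_0^+\subset G_0^{(c)}$ is the set of finite products $\exp(\tau_1M_1)\cdots\exp(\tau_NM_N)$ with $\mathrm{Im}\,\tau_j>0$, $M_j\in\mathcal C_+$. $\mathcal T_{n+}=\{(z_1,\dots,z_n)\in(X_d^{(c)})^n:\ z_j=\Lambda_1\cdots\Lambda_jc_j\ \forall j,\ \Lambda_j\in G_0^+,\ c_j\in X_d\}$. *)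

theory Defs
  imports "HOL-Analysis.Analysis"
begin

text \<open>Vectors of E_{d+1} (resp. its complexification) are represented as functions
  nat => real (resp. nat => complex) vanishing at indices > d; coordinates are x 0, ..., x d.
  Matrices are functions nat => nat => complex with entries indexed by {0..d}.\<close>

definition vec_sp :: "nat \<Rightarrow> (nat \<Rightarrow> 'a::zero) set" where
  "vec_sp d = {x. \<forall>k>d. x k = 0}"

definition eta :: "nat \<Rightarrow> nat \<Rightarrow> 'a::{one,uminus,zero}" where
  "eta d k = (if k = 0 \<or> k = d then 1 else if k < d then - 1 else 0)"

definition bform :: "nat \<Rightarrow> (nat \<Rightarrow> 'a::comm_ring_1) \<Rightarrow> (nat \<Rightarrow> 'a) \<Rightarrow> 'a" where
  "bform d x y = x 0 * y 0 + x d * y d - (\<Sum>j\<in>{1..d-1}. x j * y j)"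

definition Xr :: "nat \<Rightarrow> (nat \<Rightarrow> real) set" where
  "Xr d = {x \<in> vec_sp d. bform d x x = 1}"

definition Xc :: "nat \<Rightarrow> (nat \<Rightarrow> complex) set" where
  "Xc d = {z \<in> vec_sp d. bform d z z = 1}"

definition cvec :: "(nat \<Rightarrow> real) \<Rightarrow> (nat \<Rightarrow> complex)" where
  "cvec x = (\<lambda>k. complex_of_real (x k))"

type_synonym cmat = "nat \<Rightarrow> nat \<Rightarrow> complex"

definition mid :: "nat \<Rightarrow> cmat" where
  "mid d = (\<lambda>i k. if i = k \<and> i \<le> d then 1 else 0)"

definition mmul :: "nat \<Rightarrow> cmat \<Rightarrow> cmat \<Rightarrow> cmat" where
  "mmul d A B = (\<lambda>i k. \<Sum>j\<le>d. A i j * B j k)"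

definition mapp :: "nat \<Rightarrow> cmat \<Rightarrow> (nat \<Rightarrow> complex) \<Rightarrow> (nat \<Rightarrow> complex)" where
  "mapp d A v = (\<lambda>i. if i \<le> d then (\<Sum>j\<le>d. A i j * v j) else 0)"

definition mscale :: "complex \<Rightarrow> cmat \<Rightarrow> cmat" where
  "mscale c A = (\<lambda>i k. c * A i k)"

fun mpow :: "nat \<Rightarrow> cmat \<Rightarrow> nat \<Rightarrow> cmat" where
  "mpow d A 0 = mid d"
| "mpow d A (Suc m) = mmul d (mpow d A m) A"

definition mexp :: "nat \<Rightarrow> cmat \<Rightarrow> cmat" where
  "mexp d A = (\<lambda>i k. \<Sum>m. mpow d A m i k / of_nat (fact m))"

text \<open>matrix of ell(a wedge b): x |-> a (b,x) - b (a,x), complexified\<close>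
definition ell :: "nat \<Rightarrow> (nat \<Rightarrow> real) \<Rightarrow> (nat \<Rightarrow> real) \<Rightarrow> cmat" where
  "ell d a b = (\<lambda>i k. if i \<le> d \<and> k \<le> d
      then complex_of_real (a i * eta d k * b k - b i * eta d k * a k) else 0)"

definition C1 :: "nat \<Rightarrow> cmat set" where
  "C1 d = {ell d a b | a b. a \<in> vec_sp d \<and> b \<in> vec_sp d \<and>
      bform d a a = 1 \<and> bform d b b = 1 \<and> bform d a b = 0 \<and> a 0 * b d - a d * b 0 > 0}"

definition Cplus :: "nat \<Rightarrow> cmat set" where
  "Cplus d = {mscale (complex_of_real \<rho>) M | \<rho> M. \<rho> > 0 \<and> M \<in> C1 d}"

definition G0plus :: "nat \<Rightarrow> cmat set" where
  "G0plus d = {foldr (\<lambda>(\<tau>, M) A. mmul d (mexp d (mscale \<tau> M)) A) ps (mid d) | ps.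
      ps \<noteq> [] \<and> (\<forall>(\<tau>, M) \<in> set ps. Im \<tau> > 0 \<and> M \<in> Cplus d)}"

fun lprod :: "nat \<Rightarrow> (nat \<Rightarrow> cmat) \<Rightarrow> nat \<Rightarrow> cmat" where
  "lprod d L 0 = mid d"
| "lprod d L (Suc j) = mmul d (lprod d L j) (L (Suc j))"

definition Xcn :: "nat \<Rightarrow> nat \<Rightarrow> (nat \<Rightarrow> nat \<Rightarrow> complex) set" where
  "Xcn d n = {z. (\<forall>j. j \<notin> {1..n} \<longrightarrow> z j = (\<lambda>_. 0)) \<and> (\<forall>j\<in>{1..n}. z j \<in> Xc d)}"

definition Tplus :: "nat \<Rightarrow> nat \<Rightarrow> (nat \<Rightarrow> nat \<Rightarrow> complex) set" where
  "Tplus d n = {z \<in> Xcn d n. \<exists>L c. \<forall>j\<in>{1..n}.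
      L j \<in> G0plus d \<and> c j \<in> Xr d \<and> z j = mapp d (lprod d L j) (cvec (c j))}"

end

theory Submission
  imports Defs
begin


lemma eta_0[simp]: "eta d 0 = 1" by (simp add: eta_def)
lemma eta_d[simp]: "eta d d = 1" by (simp add: eta_def)
lemma eta_mid: "0 < k \<Longrightarrow> k < d \<Longrightarrow> eta d k = - 1" by (simp add: eta_def)
lemma eta_big: "d < k \<Longrightarrow> eta d k = 0" by (simp add: eta_def)
lemma eta_sq: "k \<le> d \<Longrightarrow> (eta d k :: 'a::comm_ring_1) * eta d k = 1" by (simp add: eta_def)

lemma bform_sum:
  fixes x y :: "nat \<Rightarrow> 'a::comm_ring_1"
  assumes "d \<ge> 1"
  shows "bform d x y = (\<Sum>k\<le>d. eta d k * x k * y k)"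
proof -
  have e: "{..d} = insert 0 (insert d {1..d-1})" using assms by auto
  have "(\<Sum>k\<le>d. eta d k * x k * y k) = x 0 * y 0 + (x d * y d + (\<Sum>k\<in>{1..d-1}. eta d k * x k * y k))"
    unfolding e using assms by (subst sum.insert; auto)+
  also have "(\<Sum>k\<in>{1..d-1}. eta d k * x k * y k) = (\<Sum>k\<in>{1..d-1}. - (x k * y k))"
    by (rule sum.cong) (auto simp: eta_mid)
  finally show ?thesis by (simp add: bform_def sum_negf)
qed

lemma bform_sym: "bform d x y = bform d y x"
  by (simp add: bform_def mult.commute)

lemma bform_add1: "bform d (\<lambda>i. x i + y i) z = bform d x z + bform d y z"
  by (simp add: bform_def algebra_simps sum.distrib)
lemma bform_add2: "bform d z (\<lambda>i. x i + y i) = bform d z x + bform d z y"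
  by (simp add: bform_def algebra_simps sum.distrib)
lemma bform_diff1: "bform d (\<lambda>i. x i - y i) z = bform d x z - bform d y z"
  by (simp add: bform_def algebra_simps sum_subtractf)
lemma bform_diff2: "bform d z (\<lambda>i. x i - y i) = bform d z x - bform d z y"
  by (simp add: bform_def algebra_simps sum_subtractf)
lemma bform_minus1: "bform d (\<lambda>i. - x i) z = - bform d x z"
  by (simp add: bform_def algebra_simps sum_negf)
lemma bform_minus2: "bform d z (\<lambda>i. - x i) = - bform d z x"
  by (simp add: bform_def algebra_simps sum_negf)
lemma bform_cm1: "bform d (\<lambda>i. c * x i) z = c * bform d x z"
  by (simp add: bform_def algebra_simps sum_distrib_left)
lemma bform_cm2: "bform d z (\<lambda>i. c * x i) = c * bform d z x"
  by (simp add: bform_def algebra_simps sum_distrib_left)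
lemma bform_mc1: "bform d (\<lambda>i. x i * c) z = c * bform d x z"
  by (simp add: bform_def algebra_simps sum_distrib_left)
lemma bform_mc2: "bform d z (\<lambda>i. x i * c) = c * bform d z x"
  by (simp add: bform_def algebra_simps sum_distrib_left)
lemma bform_div1: "bform d (\<lambda>i. x i / (c::'a::field)) z = bform d x z / c"
  by (simp add: bform_def algebra_simps sum_divide_distrib add_divide_distrib diff_divide_distrib)
lemma bform_div2: "bform d z (\<lambda>i. x i / (c::'a::field)) = bform d z x / c"
  by (simp add: bform_def algebra_simps sum_divide_distrib add_divide_distrib diff_divide_distrib)
lemma bform_zero1: "bform d (\<lambda>i. 0) z = 0" by (simp add: bform_def)
lemma bform_zero2: "bform d z (\<lambda>i. 0) = 0" by (simp add: bform_def)
lemma bform_of_real: "bform d (\<lambda>i. complex_of_real (x i)) (\<lambda>i. complex_of_real (y i)) = complex_of_real (bform d x y)"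
  by (simp add: bform_def)
lemma bform_eta: "bform d x y = bform d (\<lambda>i. x i) (\<lambda>i. y i)" by simp

lemmas bform_lin = bform_add1 bform_add2 bform_diff1 bform_diff2 bform_minus1 bform_minus2
  bform_cm1 bform_cm2 bform_mc1 bform_mc2 bform_zero1 bform_zero2

definition rot :: "nat \<Rightarrow> complex \<Rightarrow> (nat\<Rightarrow>real) \<Rightarrow> (nat\<Rightarrow>real) \<Rightarrow> (nat\<Rightarrow>complex) \<Rightarrow> (nat\<Rightarrow>complex)" where
"rot d s a b v = (\<lambda>i. v i + sin s * (complex_of_real (a i) * bform d (\<lambda>k. complex_of_real (b k)) v
     - complex_of_real (b i) * bform d (\<lambda>k. complex_of_real (a k)) v)
   - (1 - cos s) * (complex_of_real (a i) * bform d (\<lambda>k. complex_of_real (a k)) v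
     + complex_of_real (b i) * bform d (\<lambda>k. complex_of_real (b k)) v))"

definition orthon :: "nat \<Rightarrow> (nat\<Rightarrow>real) \<Rightarrow> (nat\<Rightarrow>real) \<Rightarrow> bool" where
"orthon d a b \<longleftrightarrow> bform d a a = 1 \<and> bform d b b = 1 \<and> bform d a b = 0"

lemma rot_a:
  assumes "orthon d a b"
  shows "bform d (\<lambda>k. complex_of_real (a k)) (rot d s a b v) =
    cos s * bform d (\<lambda>k. complex_of_real (a k)) v + sin s * bform d (\<lambda>k. complex_of_real (b k)) v"
  using assms unfolding rot_def orthon_def
  by (simp add: bform_lin bform_of_real bform_sym[of d b a] algebra_simps)

lemma rot_b:
  assumes "orthon d a b"
  shows "bform d (\<lambda>k. complex_of_real (b k)) (rot d s a b v) =
    cos s * bform d (\<lambda>k. complex_of_real (b k)) v - sin s * bform d (\<lambda>k. complex_of_real (a k)) v"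
  using assms unfolding rot_def orthon_def
  by (simp add: bform_lin bform_of_real bform_sym[of d b a] algebra_simps)

lemma rot_inv:
  assumes "orthon d a b"
  shows "rot d (- s) a b (rot d s a b v) = v"
proof -
  define A where "A = bform d (\<lambda>k. complex_of_real (a k)) v"
  define B where "B = bform d (\<lambda>k. complex_of_real (b k)) v"
  have sc: "sin s * sin s + cos s * cos s = 1" using sin_cos_squared_add[of s] by (simp add: power2_eq_square)
  show ?thesis
  proof
    fix i
    have "rot d (- s) a b (rot d s a b v) i = rot d s a b v i + sin (-s) * (complex_of_real (a i) * (cos s * B - sin s * A)
     - complex_of_real (b i) * (cos s * A + sin s * B))
   - (1 - cos (-s)) * (complex_of_real (a i) * (cos s * A + sin s * B)
     + complex_of_real (b i) * (cos s * B - sin s * A))"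
      by (simp only: rot_def[of d "-s"] rot_a[OF assms] rot_b[OF assms] A_def[symmetric] B_def[symmetric])
    also have "\<dots> = v i"
      unfolding rot_def A_def[symmetric] B_def[symmetric] using sc by simp algebra
    finally show "rot d (- s) a b (rot d s a b v) i = v i" .
  qed
qed

lemma rot_alt: "rot d s a b v = (\<lambda>i. v i
   + (sin s * bform d (\<lambda>k. complex_of_real (b k)) v - (1 - cos s) * bform d (\<lambda>k. complex_of_real (a k)) v) * complex_of_real (a i)
   + (- sin s * bform d (\<lambda>k. complex_of_real (a k)) v - (1 - cos s) * bform d (\<lambda>k. complex_of_real (b k)) v) * complex_of_real (b i))"
  unfolding rot_def by (rule ext) (simp add: algebra_simps)

lemma rot_form:
  assumes "orthon d a b"
  shows "bform d (rot d s a b v) (rot d s a b w) = bform d v w"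
proof -
  define A where "A = bform d (\<lambda>k. complex_of_real (a k)) v"
  define B where "B = bform d (\<lambda>k. complex_of_real (b k)) v"
  define A' where "A' = bform d (\<lambda>k. complex_of_real (a k)) w"
  define B' where "B' = bform d (\<lambda>k. complex_of_real (b k)) w"
  have sc: "sin s * sin s + cos s * cos s = 1" using sin_cos_squared_add[of s] by (simp add: power2_eq_square)
  have o: "bform d (\<lambda>k. complex_of_real (a k)) (\<lambda>k. complex_of_real (a k)) = 1"
     "bform d (\<lambda>k. complex_of_real (b k)) (\<lambda>k. complex_of_real (b k)) = 1"
     "bform d (\<lambda>k. complex_of_real (a k)) (\<lambda>k. complex_of_real (b k)) = 0"
     "bform d (\<lambda>k. complex_of_real (b k)) (\<lambda>k. complex_of_real (a k)) = 0"
    using assms by (simp_all add: orthon_def bform_of_real bform_sym[of d b a])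
  have s1: "bform d v (\<lambda>k. complex_of_real (a k)) = A" "bform d v (\<lambda>k. complex_of_real (b k)) = B"
     "bform d (\<lambda>k. complex_of_real (a k)) w = A'" "bform d (\<lambda>k. complex_of_real (b k)) w = B'"
    by (simp_all add: A_def B_def A'_def B'_def bform_sym)
  show ?thesis
    unfolding rot_alt A_def[symmetric] B_def[symmetric] A'_def[symmetric] B'_def[symmetric]
    apply (simp only: bform_lin o s1)
    using sc by algebra
qed

lemma rot_vec: "a \<in> vec_sp d \<Longrightarrow> b \<in> vec_sp d \<Longrightarrow> v \<in> vec_sp d \<Longrightarrow> rot d s a b v \<in> vec_sp d"
  by (simp add: rot_def vec_sp_def)

definition ellr :: "nat \<Rightarrow> (nat\<Rightarrow>real) \<Rightarrow> (nat\<Rightarrow>real) \<Rightarrow> nat \<Rightarrow> nat \<Rightarrow> real" where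
  "ellr d a b i k = a i * eta d k * b k - b i * eta d k * a k"
definition ell2r :: "nat \<Rightarrow> (nat\<Rightarrow>real) \<Rightarrow> (nat\<Rightarrow>real) \<Rightarrow> nat \<Rightarrow> nat \<Rightarrow> real" where
  "ell2r d a b i k = - (a i * eta d k * a k + b i * eta d k * b k)"
definition ell2 :: "nat \<Rightarrow> (nat\<Rightarrow>real) \<Rightarrow> (nat\<Rightarrow>real) \<Rightarrow> cmat" where
  "ell2 d a b = (\<lambda>i k. if i \<le> d \<and> k \<le> d then complex_of_real (ell2r d a b i k) else 0)"

lemma ell_alt: "ell d a b = (\<lambda>i k. if i \<le> d \<and> k \<le> d then complex_of_real (ellr d a b i k) else 0)"
  unfolding ell_def ellr_def by simp

lemma sum_ellr_ellr:
  assumes "d \<ge> 1" "orthon d a b"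
  shows "(\<Sum>j\<le>d. ellr d a b i j * ellr d a b j k) = ell2r d a b i k"
proof -
  have "(\<Sum>j\<le>d. ellr d a b i j * ellr d a b j k) =
     (\<Sum>j\<le>d. a i * eta d k * b k * (eta d j * b j * a j) - a i * eta d k * a k * (eta d j * b j * b j)
        - b i * eta d k * b k * (eta d j * a j * a j) + b i * eta d k * a k * (eta d j * a j * b j))"
    by (rule sum.cong) (auto simp: ellr_def algebra_simps)
  also have "\<dots> = a i * eta d k * b k * bform d b a - a i * eta d k * a k * bform d b b
        - b i * eta d k * b k * bform d a a + b i * eta d k * a k * bform d a b"
    by (simp add: bform_sum[OF assms(1)] sum.distrib sum_subtractf sum_distrib_left)
  finally show ?thesis using assms(2) by (simp add: orthon_def bform_sym[of d b a] ell2r_def)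
qed

lemma sum_ell2r_ellr:
  assumes "d \<ge> 1" "orthon d a b"
  shows "(\<Sum>j\<le>d. ell2r d a b i j * ellr d a b j k) = - ellr d a b i k"
proof -
  have "(\<Sum>j\<le>d. ell2r d a b i j * ellr d a b j k) =
     (\<Sum>j\<le>d. - (a i * eta d k * b k * (eta d j * a j * a j)) + a i * eta d k * a k * (eta d j * a j * b j)
        - b i * eta d k * b k * (eta d j * b j * a j) + b i * eta d k * a k * (eta d j * b j * b j))"
    by (rule sum.cong) (auto simp: ellr_def ell2r_def algebra_simps)
  also have "\<dots> = - (a i * eta d k * b k * bform d a a) + a i * eta d k * a k * bform d a b
        - b i * eta d k * b k * bform d b a + b i * eta d k * a k * bform d b b"
    by (simp add: bform_sum[OF assms(1)] sum.distrib sum_subtractf sum_distrib_left sum_negf)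
  finally show ?thesis using assms(2) by (simp add: orthon_def bform_sym[of d b a] ellr_def)
qed

lemma mmul_ell_ell:
  assumes "d \<ge> 1" "orthon d a b"
  shows "mmul d (ell d a b) (ell d a b) = ell2 d a b"
proof (intro ext)
  fix i k
  show "mmul d (ell d a b) (ell d a b) i k = ell2 d a b i k"
  proof (cases "i \<le> d \<and> k \<le> d")
    case True
    have "mmul d (ell d a b) (ell d a b) i k = (\<Sum>j\<le>d. complex_of_real (ellr d a b i j * ellr d a b j k))"
      unfolding mmul_def ell_alt using True by (intro sum.cong) auto
    also have "\<dots> = complex_of_real (ell2r d a b i k)"
      by (simp only: of_real_sum[symmetric] sum_ellr_ellr[OF assms])
    finally show ?thesis using True by (simp add: ell2_def)
  next
    case False then show ?thesis by (auto simp: mmul_def ell_alt ell2_def)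
  qed
qed

lemma mmul_ell2_ell:
  assumes "d \<ge> 1" "orthon d a b"
  shows "mmul d (ell2 d a b) (ell d a b) = mscale (-1) (ell d a b)"
proof (intro ext)
  fix i k
  show "mmul d (ell2 d a b) (ell d a b) i k = mscale (-1) (ell d a b) i k"
  proof (cases "i \<le> d \<and> k \<le> d")
    case True
    have "mmul d (ell2 d a b) (ell d a b) i k = (\<Sum>j\<le>d. complex_of_real (ell2r d a b i j * ellr d a b j k))"
      unfolding mmul_def ell_alt ell2_def using True by (intro sum.cong) auto
    also have "\<dots> = complex_of_real (- ellr d a b i k)"
      by (simp only: of_real_sum[symmetric] sum_ell2r_ellr[OF assms])
    finally show ?thesis using True by (simp add: mscale_def ell_alt)
  next
    case False then show ?thesis by (auto simp: mmul_def ell_alt ell2_def mscale_def)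
  qed
qed

lemma mmul_mid_left:
  assumes "\<And>i k. i > d \<or> k > d \<Longrightarrow> X i k = 0"
  shows "mmul d (mid d) X = X"
proof (intro ext)
  fix i k
  have "mmul d (mid d) X i k = (\<Sum>j\<le>d. if j = i then X i k else 0)"
    unfolding mmul_def mid_def by (intro sum.cong) auto
  also have "\<dots> = X i k" using assms[of i k] by (auto simp: sum.delta)
  finally show "mmul d (mid d) X i k = X i k" .
qed

lemma mmul_mid_ell: "mmul d (mid d) (ell d a b) = ell d a b"
  by (rule mmul_mid_left) (auto simp: ell_def)

lemma mmul_scale1: "mmul d (mscale c X) Y = mscale c (mmul d X Y)"
  by (simp add: mmul_def mscale_def sum_distrib_left mult.assoc)
lemma mscale_mscale: "mscale c (mscale e X) = mscale (c * e) X"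
  by (simp add: mscale_def mult.assoc)
lemma mscale_1: "mscale 1 X = X" by (simp add: mscale_def)
lemma mmul_scale2: "mmul d X (mscale c Y) = mscale c (mmul d X Y)"
  by (simp add: mmul_def mscale_def sum_distrib_left algebra_simps)

lemma mpow_scale: "mpow d (mscale w E) m = mscale (w ^ m) (mpow d E m)"
  by (induction m) (simp_all add: mscale_1 mmul_scale1 mmul_scale2 mscale_mscale mult.commute)

lemma mpow_ell:
  assumes "d \<ge> 1" "orthon d a b"
  shows "mpow d (ell d a b) m = (if m = 0 then mid d else if odd m then mscale ((-1) ^ ((m - 1) div 2)) (ell d a b)
      else mscale ((-1) ^ (m div 2 - 1)) (ell2 d a b))"
proof (induction m)
  case 0 then show ?case by simp
next
  case (Suc m)
  show ?case
  proof (cases "m = 0")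
    case True then show ?thesis by (simp add: mmul_mid_ell mscale_1)
  next
    case False
    show ?thesis
    proof (cases "odd m")
      case True
      then obtain q where q: "m = 2 * q + 1" by (metis oddE)
      show ?thesis using Suc.IH False True q
        by (simp add: mmul_scale1 mmul_ell_ell[OF assms])
    next
      case ev: False
      then obtain q where q: "m = 2 * q" by (metis evenE)
      with False have "q \<ge> 1" by simp
      then obtain r where r: "q = Suc r" by (cases q) auto
      show ?thesis using Suc.IH False ev q r
        by (simp add: mmul_scale1 mmul_ell2_ell[OF assms] mscale_mscale)
    qed
  qed
qed



lemma mexp_term:
  assumes "d \<ge> 1" "orthon d a b"
  shows "mpow d (mscale w (ell d a b)) m i k / of_nat (fact m) =
    complex_of_real (sin_coeff m) * w ^ m * ell d a b i k - complex_of_real (cos_coeff m) * w ^ m * ell2 d a b i k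
    + (if m = 0 then mid d i k + ell2 d a b i k else 0)"
proof -
  have pw: "mpow d (mscale w (ell d a b)) m i k = w ^ m * mpow d (ell d a b) m i k"
    by (simp only: mpow_scale) (simp add: mscale_def)
  consider "m = 0" | "odd m" | "even m" "m \<noteq> 0" by blast
  then show ?thesis
  proof cases
    case 1 then show ?thesis using pw by (simp add: sin_coeff_def cos_coeff_def)
  next
    case 2
    then have "m \<noteq> 0" "0 < m" by (auto intro!: odd_pos)
    with 2 show ?thesis using pw mpow_ell[OF assms, of m]
      by (simp add: sin_coeff_def cos_coeff_def mscale_def)
  next
    case 3
    then obtain q where q: "m = 2 * Suc q" by (metis evenE mult_0_right not0_implies_Suc)
    have "(-1::complex) ^ (m div 2 - 1) = - ((-1) ^ (m div 2))" using q by simp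
    then show ?thesis using 3 pw mpow_ell[OF assms, of m]
      by (simp add: sin_coeff_def cos_coeff_def mscale_def)
  qed
qed

lemma mexp_ell:
  assumes "d \<ge> 1" "orthon d a b"
  shows "mexp d (mscale w (ell d a b)) = (\<lambda>i k. mid d i k + sin w * ell d a b i k + (1 - cos w) * ell2 d a b i k)"
proof (intro ext)
  fix i k
  have s1: "(\<lambda>n. complex_of_real (sin_coeff n) * w ^ n) sums sin w"
    using sin_converges[of w] by (simp add: scaleR_conv_of_real)
  have c1: "(\<lambda>n. complex_of_real (cos_coeff n) * w ^ n) sums cos w"
    using cos_converges[of w] by (simp add: scaleR_conv_of_real)
  have "(\<lambda>m. complex_of_real (sin_coeff m) * w ^ m * ell d a b i k - complex_of_real (cos_coeff m) * w ^ m * ell2 d a b i k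
    + (if m = 0 then mid d i k + ell2 d a b i k else 0)) sums
    (sin w * ell d a b i k - cos w * ell2 d a b i k + (mid d i k + ell2 d a b i k))"
    by (intro sums_add sums_diff sums_mult2 s1 c1) (rule sums_single[where f = "\<lambda>_. mid d i k + ell2 d a b i k", simplified])
  moreover have "(\<lambda>m. mpow d (mscale w (ell d a b)) m i k / of_nat (fact m)) = (\<lambda>m. complex_of_real (sin_coeff m) * w ^ m * ell d a b i k - complex_of_real (cos_coeff m) * w ^ m * ell2 d a b i k
    + (if m = 0 then mid d i k + ell2 d a b i k else 0))"
    by (rule ext) (rule mexp_term[OF assms])
  moreover have "sin w * ell d a b i k - cos w * ell2 d a b i k + (mid d i k + ell2 d a b i k) = 
     mid d i k + sin w * ell d a b i k + (1 - cos w) * ell2 d a b i k" by (simp add: algebra_simps)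
  ultimately have "(\<lambda>m. mpow d (mscale w (ell d a b)) m i k / of_nat (fact m)) sums
     (mid d i k + sin w * ell d a b i k + (1 - cos w) * ell2 d a b i k)"
    by simp
  then show "mexp d (mscale w (ell d a b)) i k = mid d i k + sin w * ell d a b i k + (1 - cos w) * ell2 d a b i k"
    unfolding mexp_def by (simp add: sums_iff)
qed

lemma of_real_eta: "complex_of_real (eta d k) = eta d k"
  by (simp add: eta_def)

lemma mapp_rot:
  assumes "d \<ge> 1" "orthon d a b" "a \<in> vec_sp d" "b \<in> vec_sp d" "v \<in> vec_sp d"
  shows "mapp d (mexp d (mscale w (ell d a b))) v = rot d w a b v"
proof (intro ext)
  fix i
  show "mapp d (mexp d (mscale w (ell d a b))) v i = rot d w a b v i"
  proof (cases "i \<le> d")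
    case False
    then show ?thesis using assms(3-5) by (simp add: mapp_def rot_def vec_sp_def)
  next
    case True
    have "mapp d (mexp d (mscale w (ell d a b))) v i =
       (\<Sum>j\<le>d. (mid d i j + sin w * ell d a b i j + (1 - cos w) * ell2 d a b i j) * v j)"
      by (simp add: mapp_def mexp_ell[OF assms(1,2)] True)
    also have "\<dots> =
      (\<Sum>j\<le>d. (if j = i then v i else 0) + sin w * (complex_of_real (a i) * (eta d j * complex_of_real (b j) * v j)
        - complex_of_real (b i) * (eta d j * complex_of_real (a j) * v j))
        - (1 - cos w) * (complex_of_real (a i) * (eta d j * complex_of_real (a j) * v j) +
           complex_of_real (b i) * (eta d j * complex_of_real (b j) * v j)))"
      using True
      by (intro sum.cong) (auto simp: mid_def ell_alt ellr_def ell2_def ell2r_def algebra_simps of_real_eta)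
    also have "\<dots> = rot d w a b v i"
      unfolding rot_def bform_sum[OF assms(1)] using True
      by (simp add: sum.distrib sum_subtractf sum_distrib_left algebra_simps)
    finally show ?thesis .
  qed
qed

lemma mapp_mmul: "mapp d (mmul d A B) v = mapp d A (mapp d B v)"
proof (intro ext)
  fix i
  show "mapp d (mmul d A B) v i = mapp d A (mapp d B v) i"
    unfolding mapp_def mmul_def
    by (simp add: sum_distrib_left sum_distrib_right mult.assoc) (rule impI, rule sum.swap)
qed

lemma mapp_vec: "mapp d A v \<in> vec_sp d"
  by (simp add: mapp_def vec_sp_def)

lemma mapp_mid: "v \<in> vec_sp d \<Longrightarrow> mapp d (mid d) v = v"
proof (intro ext)
  fix i assume v: "v \<in> vec_sp d"
  show "mapp d (mid d) v i = v i"
  proof (cases "i \<le> d")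
    case True
    have "(\<Sum>j\<le>d. mid d i j * v j) = (\<Sum>j\<le>d. if j = i then v i else 0)"
      by (intro sum.cong) (auto simp: mid_def)
    then show ?thesis using True by (simp add: mapp_def sum.delta)
  next
    case False then show ?thesis using v by (simp add: mapp_def vec_sp_def)
  qed
qed

definition FF :: "nat \<Rightarrow> (complex \<times> cmat) list \<Rightarrow> cmat \<Rightarrow> cmat" where
  "FF d ps B = foldr (\<lambda>(\<tau>, M) A. mmul d (mexp d (mscale \<tau> M)) A) ps B"

lemma FF_app: "mapp d (FF d xs B) v = mapp d (FF d xs (mid d)) (mapp d B v)"
proof (induction xs arbitrary: v)
  case Nil then show ?case by (simp add: FF_def mapp_mid mapp_vec)
next
  case (Cons x xs)
  obtain t M where x: "x = (t, M)" by (cases x)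
  show ?case using Cons by (simp add: FF_def x mapp_mmul)
qed

lemma FF_snoc: "v \<in> vec_sp d \<Longrightarrow> mapp d (FF d (xs @ [(t, M)]) (mid d)) v = mapp d (FF d xs (mid d)) (mapp d (mexp d (mscale t M)) v)"
  by (simp add: FF_def FF_app[unfolded FF_def, of _ _ "mmul d (mexp d (mscale t M)) (mid d)"] mapp_mmul mapp_mid)

definition C1c :: "nat \<Rightarrow> (nat\<Rightarrow>real) \<Rightarrow> (nat\<Rightarrow>real) \<Rightarrow> bool" where
  "C1c d a b \<longleftrightarrow> a \<in> vec_sp d \<and> b \<in> vec_sp d \<and>
      bform d a a = 1 \<and> bform d b b = 1 \<and> bform d a b = 0 \<and> a 0 * b d - a d * b 0 > 0"

lemma C1c_orthon: "C1c d a b \<Longrightarrow> orthon d a b" by (simp add: C1c_def orthon_def)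

lemma Cplus_E: "M \<in> Cplus d \<Longrightarrow> \<exists>\<rho> a b. \<rho> > 0 \<and> C1c d a b \<and> M = mscale (complex_of_real \<rho>) (ell d a b)"
  unfolding Cplus_def C1_def C1c_def by blast

lemma Cplus_act:
  assumes "d \<ge> 1" "M \<in> Cplus d" "v \<in> vec_sp d"
  shows "\<exists>\<rho> a b. \<rho> > 0 \<and> C1c d a b \<and> (\<forall>t. mapp d (mexp d (mscale t M)) v = rot d (t * complex_of_real \<rho>) a b v)"
proof -
  obtain \<rho> a b where r: "\<rho> > 0" "C1c d a b" "M = mscale (complex_of_real \<rho>) (ell d a b)"
    using Cplus_E[OF assms(2)] by blast
  show ?thesis
    using r assms mapp_rot[OF assms(1) C1c_orthon[OF r(2)]]
    by (intro exI[of _ \<rho>] exI[of _ a] exI[of _ b]) (simp add: mscale_mscale C1c_def)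
qed

lemma Cplus_inv:
  assumes "d \<ge> 1" "M \<in> Cplus d" "v \<in> vec_sp d"
  shows "mapp d (mexp d (mscale (- t) M)) (mapp d (mexp d (mscale t M)) v) = v"
    "mapp d (mexp d (mscale t M)) (mapp d (mexp d (mscale (- t) M)) v) = v"
proof -
  obtain \<rho> a b where r: "\<rho> > 0" "C1c d a b" "M = mscale (complex_of_real \<rho>) (ell d a b)"
    using Cplus_E[OF assms(2)] by blast
  have o: "orthon d a b" and ab: "a \<in> vec_sp d" "b \<in> vec_sp d" using r(2) by (auto simp: C1c_def orthon_def)
  have m: "mapp d (mexp d (mscale s M)) w = rot d (s * complex_of_real \<rho>) a b w" if "w \<in> vec_sp d" for s w
    using mapp_rot[OF assms(1) o ab that] r(3) by (simp add: mscale_mscale)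
  show "mapp d (mexp d (mscale (- t) M)) (mapp d (mexp d (mscale t M)) v) = v"
    using rot_inv[OF o, of "t * complex_of_real \<rho>"] by (simp add: m assms(3) rot_vec ab)
  show "mapp d (mexp d (mscale t M)) (mapp d (mexp d (mscale (- t) M)) v) = v"
    using rot_inv[OF o, of "- t * complex_of_real \<rho>"] by (simp add: m assms(3) rot_vec ab)
qed

lemma Cplus_form:
  assumes "d \<ge> 1" "M \<in> Cplus d" "v \<in> vec_sp d" "w \<in> vec_sp d"
  shows "bform d (mapp d (mexp d (mscale t M)) v) (mapp d (mexp d (mscale t M)) w) = bform d v w"
proof -
  obtain \<rho> a b where r: "\<rho> > 0" "C1c d a b" "M = mscale (complex_of_real \<rho>) (ell d a b)"
    using Cplus_E[OF assms(2)] by blast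
  have o: "orthon d a b" and ab: "a \<in> vec_sp d" "b \<in> vec_sp d" using r(2) by (auto simp: C1c_def orthon_def)
  have m: "mapp d (mexp d (mscale s M)) w = rot d (s * complex_of_real \<rho>) a b w" if "w \<in> vec_sp d" for s w
    using mapp_rot[OF assms(1) o ab that] r(3) by (simp add: mscale_mscale)
  show ?thesis using assms by (simp add: m rot_form[OF o])
qed

fun pinv :: "nat \<Rightarrow> (complex \<times> cmat) list \<Rightarrow> (nat \<Rightarrow> complex) \<Rightarrow> (nat \<Rightarrow> complex)" where
  "pinv d [] v = v"
| "pinv d ((t, M) # xs) v = pinv d xs (mapp d (mexp d (mscale (- t) M)) v)"

lemma pinv_vec: "v \<in> vec_sp d \<Longrightarrow> pinv d xs v \<in> vec_sp d"
proof (induction xs arbitrary: v)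
  case (Cons x xs) then show ?case by (cases x) (simp add: mapp_vec)
qed simp

lemma pinv_r:
  assumes "d \<ge> 1" "\<forall>(t, M) \<in> set xs. M \<in> Cplus d" "v \<in> vec_sp d"
  shows "mapp d (FF d xs (mid d)) (pinv d xs v) = v"
  using assms(2,3)
proof (induction xs arbitrary: v)
  case Nil then show ?case by (simp add: FF_def mapp_mid)
next
  case (Cons x xs)
  obtain t M where x: "x = (t, M)" by (cases x)
  have M: "M \<in> Cplus d" and xs: "\<forall>(t, M) \<in> set xs. M \<in> Cplus d" using Cons.prems x by auto
  have "mapp d (FF d (x # xs) (mid d)) (pinv d (x # xs) v) =
      mapp d (mexp d (mscale t M)) (mapp d (FF d xs (mid d)) (pinv d xs (mapp d (mexp d (mscale (- t) M)) v)))"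
    by (simp add: x FF_def mapp_mmul)
  also have "\<dots> = v" using Cons.IH[OF xs mapp_vec] Cplus_inv[OF assms(1) M Cons.prems(2)] by simp
  finally show ?case .
qed

lemma pinv_l:
  assumes "d \<ge> 1" "\<forall>(t, M) \<in> set xs. M \<in> Cplus d" "v \<in> vec_sp d"
  shows "pinv d xs (mapp d (FF d xs (mid d)) v) = v"
  using assms(2,3)
proof (induction xs arbitrary: v)
  case Nil then show ?case by (simp add: FF_def mapp_mid)
next
  case (Cons x xs)
  obtain t M where x: "x = (t, M)" by (cases x)
  have M: "M \<in> Cplus d" and xs: "\<forall>(t, M) \<in> set xs. M \<in> Cplus d" using Cons.prems x by auto
  have "pinv d (x # xs) (mapp d (FF d (x # xs) (mid d)) v) =
       pinv d xs (mapp d (mexp d (mscale (- t) M)) (mapp d (mexp d (mscale t M)) (mapp d (FF d xs (mid d)) v)))"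
    by (simp add: x FF_def mapp_mmul)
  also have "\<dots> = v" using Cons.IH[OF xs Cons.prems(2)] Cplus_inv[OF assms(1) M mapp_vec] by simp
  finally show ?case .
qed

lemma pinv_form:
  assumes "d \<ge> 1" "\<forall>(t, M) \<in> set xs. M \<in> Cplus d" "v \<in> vec_sp d" "w \<in> vec_sp d"
  shows "bform d (pinv d xs v) (pinv d xs w) = bform d v w"
  using assms(2,3,4)
proof (induction xs arbitrary: v w)
  case Nil then show ?case by simp
next
  case (Cons x xs)
  obtain t M where x: "x = (t, M)" by (cases x)
  have M: "M \<in> Cplus d" and xs: "\<forall>(t, M) \<in> set xs. M \<in> Cplus d" using Cons.prems x by auto
  have "bform d (pinv d (x # xs) v) (pinv d (x # xs) w) =
      bform d (mapp d (mexp d (mscale (- t) M)) v) (mapp d (mexp d (mscale (- t) M)) w)"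
    using Cons.IH[OF xs mapp_vec mapp_vec] by (simp add: x)
  also have "\<dots> = bform d v w" using Cplus_form[OF assms(1) M Cons.prems(2,3)] .
  finally show ?case .
qed



definition sv1 :: "nat \<Rightarrow> (nat\<Rightarrow>real) \<Rightarrow> (nat\<Rightarrow>real) \<Rightarrow> (nat\<Rightarrow>real)" where
  "sv1 d v0 y = (\<lambda>i. v0 i - (bform d v0 y / bform d y y) * y i)"
definition sv :: "nat \<Rightarrow> (nat\<Rightarrow>real) \<Rightarrow> (nat\<Rightarrow>real) \<Rightarrow> (nat\<Rightarrow>real) \<Rightarrow> (nat\<Rightarrow>real)" where
  "sv d v0 x y = (\<lambda>i. (bform d (sv1 d v0 y) x / bform d (sv1 d v0 y) (sv1 d v0 y)) * sv1 d v0 y i)"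
definition sm :: "nat \<Rightarrow> (nat\<Rightarrow>real) \<Rightarrow> (nat\<Rightarrow>real) \<Rightarrow> (nat\<Rightarrow>real) \<Rightarrow> real" where
  "sm d v0 x y = sqrt (1 - bform d (sv d v0 x y) (sv d v0 x y))"
definition ssh :: "nat \<Rightarrow> (nat\<Rightarrow>real) \<Rightarrow> (nat\<Rightarrow>real) \<Rightarrow> (nat\<Rightarrow>real) \<Rightarrow> real" where
  "ssh d v0 x y = sqrt (bform d y y) / sm d v0 x y"
definition sch :: "nat \<Rightarrow> (nat\<Rightarrow>real) \<Rightarrow> (nat\<Rightarrow>real) \<Rightarrow> (nat\<Rightarrow>real) \<Rightarrow> real" where
  "sch d v0 x y = sqrt (1 + (ssh d v0 x y)^2)"
definition sa :: "nat \<Rightarrow> (nat\<Rightarrow>real) \<Rightarrow> (nat\<Rightarrow>real) \<Rightarrow> (nat\<Rightarrow>real) \<Rightarrow> (nat\<Rightarrow>real)" where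
  "sa d v0 x y = (\<lambda>i. (x i - sv d v0 x y i) / (sch d v0 x y * sm d v0 x y))"
definition sb :: "nat \<Rightarrow> (nat\<Rightarrow>real) \<Rightarrow> (nat\<Rightarrow>real)" where
  "sb d y = (\<lambda>i. - y i / sqrt (bform d y y))"
definition sth :: "nat \<Rightarrow> (nat\<Rightarrow>real) \<Rightarrow> (nat\<Rightarrow>real) \<Rightarrow> (nat\<Rightarrow>real) \<Rightarrow> real" where
  "sth d v0 x y = ln (ssh d v0 x y + sch d v0 x y)"
definition scc :: "nat \<Rightarrow> (nat\<Rightarrow>real) \<Rightarrow> real \<Rightarrow> (nat\<Rightarrow>real) \<Rightarrow> (nat\<Rightarrow>real) \<Rightarrow> (nat\<Rightarrow>real)" where
  "scc d v0 s x y = (\<lambda>i. sv d v0 x y i + sm d v0 x y * (cos s * sa d v0 x y i + sin s * sb d y i))"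
definition sD :: "nat \<Rightarrow> (nat\<Rightarrow>real) \<Rightarrow> (nat\<Rightarrow>real) \<Rightarrow> (nat\<Rightarrow>real) \<Rightarrow> bool" where
  "sD d v0 x y \<longleftrightarrow> bform d y y > 0 \<and> bform d (sv d v0 x y) (sv d v0 x y) < 1 \<and>
     (x d - sv d v0 x y d) * y 0 - (x 0 - sv d v0 x y 0) * y d > 0"

lemma sv_props:
  assumes "bform d y y \<noteq> 0"
  shows "bform d (sv d v0 x y) y = 0" "bform d (sv d v0 x y) x = bform d (sv d v0 x y) (sv d v0 x y)"
proof -
  define v1 where "v1 = sv1 d v0 y"
  have v1y: "bform d v1 y = 0" using assms unfolding v1_def sv1_def by (simp only: bform_lin; simp)
  have sv: "sv d v0 x y = (\<lambda>i. (bform d v1 x / bform d v1 v1) * v1 i)" by (simp add: sv_def v1_def)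
  show "bform d (sv d v0 x y) y = 0" unfolding sv by (simp only: bform_lin v1y; simp)
  show "bform d (sv d v0 x y) x = bform d (sv d v0 x y) (sv d v0 x y)"
    unfolding sv by (simp only: bform_lin) (cases "bform d v1 v1 = 0"; simp add: bform_sym[of d x] power2_eq_square field_simps)
qed

lemma vec_sp_lin:
  "x \<in> vec_sp d \<Longrightarrow> y \<in> vec_sp d \<Longrightarrow> (\<lambda>i. x i + y i) \<in> vec_sp d"
  "x \<in> vec_sp d \<Longrightarrow> y \<in> vec_sp d \<Longrightarrow> (\<lambda>i. x i - y i) \<in> vec_sp d"
  "x \<in> vec_sp d \<Longrightarrow> (\<lambda>i. c * x i) \<in> vec_sp d"
  "x \<in> vec_sp d \<Longrightarrow> (\<lambda>i. x i / (e::'a::field)) \<in> vec_sp d"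
  "x \<in> vec_sp d \<Longrightarrow> (\<lambda>i. - x i) \<in> vec_sp d"
  by (auto simp: vec_sp_def)

lemma sv_vec: "v0 \<in> vec_sp d \<Longrightarrow> y \<in> vec_sp d \<Longrightarrow> sv d v0 x y \<in> vec_sp d"
  by (simp add: sv_def sv1_def vec_sp_def)

lemma cos_i_real: "cos (\<i> * complex_of_real t) = complex_of_real ((exp t + exp (- t)) / 2)"
  by (simp add: cos_exp_eq exp_of_real[symmetric] exp_minus field_simps)

lemma sin_i_real: "sin (\<i> * complex_of_real t) = \<i> * complex_of_real ((exp t - exp (- t)) / 2)"
  by (simp add: sin_exp_eq exp_of_real[symmetric] exp_minus field_simps)

lemmas bform_divs = bform_div1 bform_div2

lemma aux_ori: "q \<noteq> 0 \<Longrightarrow> (t::real) \<noteq> 0 \<Longrightarrow> p / q * (- r / t) - p' / q * (- r' / t) = (p' * r' - p * r) / (q * t)"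
  by (simp add: field_simps)

lemma SEC:
  assumes d2: "d \<ge> 2" and v0: "v0 \<in> vec_sp d" and xv: "x \<in> vec_sp d" and yv: "y \<in> vec_sp d"
    and n1: "bform d x x - bform d y y = 1" and n2: "bform d x y = 0" and D: "sD d v0 x y"
  shows "C1c d (sa d v0 x y) (sb d y)" "sth d v0 x y > 0" "scc d v0 s x y \<in> Xr d"
    "rot d (complex_of_real s + \<i> * complex_of_real (sth d v0 x y)) (sa d v0 x y) (sb d y) (cvec (scc d v0 s x y))
       = (\<lambda>i. complex_of_real (x i) + \<i> * complex_of_real (y i))"
proof -
  define v where "v = sv d v0 x y"
  define Y where "Y = bform d y y"
  define V where "V = bform d v v"
  define m where "m = sm d v0 x y"
  define sh where "sh = ssh d v0 x y"
  define ch where "ch = sch d v0 x y"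
  define a where "a = sa d v0 x y"
  define b where "b = sb d y"
  define th where "th = sth d v0 x y"
  define c where "c = scc d v0 s x y"
  have Y: "Y > 0" and V: "V < 1" and ori: "(x d - v d) * y 0 - (x 0 - v 0) * y d > 0"
    using D by (simp_all add: sD_def Y_def V_def v_def)
  have vy: "bform d v y = 0" and vx: "bform d v x = V"
    using sv_props[of d y v0 x] Y by (simp_all add: v_def Y_def V_def)
  have vv: "v \<in> vec_sp d" using sv_vec[OF v0 yv] by (simp add: v_def)
  have m: "m = sqrt (1 - V)" by (simp add: m_def sm_def V_def v_def)
  have mpos: "m > 0" using V by (simp add: m)
  have m2: "m * m = 1 - V" using V by (simp add: m)
  have sY: "sqrt Y > 0" "sqrt Y * sqrt Y = Y" using Y by simp_all
  have sh: "sh = sqrt Y / m" by (simp add: sh_def ssh_def Y_def m_def)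
  have shpos: "sh > 0" using sY mpos by (simp add: sh)
  have ch: "ch = sqrt (1 + sh * sh)" by (simp add: ch_def sch_def sh_def power2_eq_square)
  have sp: "0 < 1 + sh * sh" using shpos by (simp add: add_pos_nonneg)
  have chpos: "ch > 0" and ch2: "ch * ch = 1 + sh * sh" using sp by (simp_all add: ch)
  have ch1: "ch \<ge> 1" using sp by (simp add: ch)
  have msh: "m * sh = sqrt Y" using mpos by (simp add: sh)
  have key: "ch * ch * (m * m) = m * m + Y"
  proof -
    have "ch * ch * (m * m) = (1 + sh * sh) * (m * m)" using ch2 by simp
    also have "\<dots> = m * m + (m * sh) * (m * sh)" by (simp add: algebra_simps)
    finally show ?thesis using msh sY by simp
  qed
  have a: "a = (\<lambda>i. (x i - v i) / (ch * m))" by (simp add: a_def sa_def v_def ch_def m_def)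
  have b: "b = (\<lambda>i. - y i / sqrt Y)" by (simp add: b_def sb_def Y_def)
  have xsym: "bform d x v = V" "bform d y x = bform d x y" "bform d y v = bform d v y"
    using vx by (simp_all add: bform_sym)
  have chm: "ch * m \<noteq> 0" using chpos mpos by simp
  have aa: "bform d a a = 1"
  proof -
    have "bform d a a = (bform d x x - V) / ((ch * m) * (ch * m))"
      unfolding a using chm by (simp only: bform_lin bform_divs) (simp add: xsym vx V_def[symmetric] field_simps)
    also have "\<dots> = 1"
    proof -
      have e1: "(ch * m) * (ch * m) = ch * ch * (m * m)" by (simp add: algebra_simps)
      have "bform d x x - V = (ch * m) * (ch * m)" using n1 key m2 e1 unfolding Y_def by linarith
      then show ?thesis using chm by simp
    qed
    finally show ?thesis .
  qed
  have bb: "bform d b b = 1"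
    unfolding b by (simp only: bform_lin bform_divs) (use sY in \<open>simp add: Y_def[symmetric]\<close>)
  have ab: "bform d a b = 0"
    unfolding a b by (simp only: bform_lin bform_divs) (simp add: xsym n2 vy)
  have av: "bform d a v = 0"
    unfolding a by (simp only: bform_lin bform_divs) (simp add: xsym vx V_def)
  have bv: "bform d b v = 0"
    unfolding b by (simp only: bform_lin bform_divs) (simp add: xsym vy)
  have aori: "a 0 * b d - a d * b 0 > 0"
  proof -
    have "a 0 * b d - a d * b 0 = ((x d - v d) * y 0 - (x 0 - v 0) * y d) / (ch * m * sqrt Y)"
      unfolding a b using chm sY by (intro aux_ori) auto
    then show ?thesis using ori chpos mpos sY by simp
  qed
  have avec: "a \<in> vec_sp d" "b \<in> vec_sp d" unfolding a b using xv yv vv by (auto simp: vec_sp_def)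
  show "C1c d (sa d v0 x y) (sb d y)"
    using aa bb ab aori avec by (simp add: C1c_def a_def[symmetric] b_def[symmetric])
  have th: "th = ln (sh + ch)" by (simp add: th_def sth_def sh_def ch_def)
  have thpos: "th > 0" unfolding th using shpos ch1 by (intro ln_gt_zero) simp
  then show "sth d v0 x y > 0" by (simp add: th_def)
  have eth: "exp th = sh + ch" using shpos chpos by (simp add: th)
  have emth: "exp (- th) = ch - sh"
  proof -
    have "(ch - sh) * (sh + ch) = 1" using ch2 by (simp add: algebra_simps)
    then show ?thesis using eth shpos chpos by (simp add: exp_minus field_simps)
  qed
  have coshth: "(exp th + exp (- th)) / 2 = ch" and sinhth: "(exp th - exp (- th)) / 2 = sh"
    using eth emth by simp_all
  have c: "c = (\<lambda>i. v i + m * (cos s * a i + sin s * b i))"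
    by (simp add: c_def scc_def v_def m_def a_def b_def)
  have bsym: "bform d v a = 0" "bform d v b = 0" "bform d b a = 0" using av bv ab by (simp_all add: bform_sym)
  have ac: "bform d a c = m * cos s" and bc: "bform d b c = m * sin s"
    unfolding c by (simp only: bform_lin; simp add: aa bb ab av bv bsym)+
  have "bform d c c = V + (m * m) * (cos s * cos s) + (m * m) * (sin s * sin s)"
    unfolding c by (simp only: bform_lin; simp add: aa bb ab av bv bsym V_def[symmetric] algebra_simps power2_eq_square)
  then have "bform d c c = V + (m * m) * (cos s * cos s + sin s * sin s)" by (simp only: distrib_left add.assoc)
  moreover have "cos s * cos s + sin s * sin s = 1" using sin_cos_squared_add[of s] by (simp add: power2_eq_square)
  ultimately have cc: "bform d c c = 1" using m2 by simp
  have cvec_: "c \<in> vec_sp d" unfolding c using vv avec by (auto simp: vec_sp_def)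
  show "scc d v0 s x y \<in> Xr d" using cc cvec_ by (simp add: Xr_def c_def)
  have xi: "x i = v i + ch * m * a i" for i using chm by (simp add: a)
  have yi: "y i = - (m * sh) * b i" for i using sY by (simp add: b msh)
  have sc1: "complex_of_real (sin s) * complex_of_real (sin s) + complex_of_real (cos s) * complex_of_real (cos s) = 1"
    by (simp flip: of_real_mult of_real_add) (simp add: power2_eq_square[symmetric])
  show "rot d (complex_of_real s + \<i> * complex_of_real (sth d v0 x y)) (sa d v0 x y) (sb d y) (cvec (scc d v0 s x y))
       = (\<lambda>i. complex_of_real (x i) + \<i> * complex_of_real (y i))"
  proof
    fix i
    have r1: "bform d (\<lambda>k. complex_of_real (a k)) (cvec c) = complex_of_real (m * cos s)"
      using ac by (simp add: cvec_def bform_of_real)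
    have r2: "bform d (\<lambda>k. complex_of_real (b k)) (cvec c) = complex_of_real (m * sin s)"
      using bc by (simp add: cvec_def bform_of_real)
    have cs: "cos (complex_of_real s + \<i> * complex_of_real th) = complex_of_real (cos s) * complex_of_real ch - complex_of_real (sin s) * (\<i> * complex_of_real sh)"
      by (simp add: cos_add cos_i_real sin_i_real coshth sinhth cos_of_real sin_of_real)
    have sn: "sin (complex_of_real s + \<i> * complex_of_real th) = complex_of_real (sin s) * complex_of_real ch + complex_of_real (cos s) * (\<i> * complex_of_real sh)"
      by (simp add: sin_add cos_i_real sin_i_real coshth sinhth cos_of_real sin_of_real)
    have "rot d (complex_of_real s + \<i> * complex_of_real th) a b (cvec c) i =
       complex_of_real (v i) + complex_of_real m * (complex_of_real (cos s) * complex_of_real (a i) + complex_of_real (sin s) * complex_of_real (b i))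
      + (complex_of_real (sin s) * complex_of_real ch + complex_of_real (cos s) * (\<i> * complex_of_real sh)) *
        (complex_of_real (a i) * (complex_of_real m * complex_of_real (sin s)) - complex_of_real (b i) * (complex_of_real m * complex_of_real (cos s)))
      - (1 - (complex_of_real (cos s) * complex_of_real ch - complex_of_real (sin s) * (\<i> * complex_of_real sh))) *
        (complex_of_real (a i) * (complex_of_real m * complex_of_real (cos s)) + complex_of_real (b i) * (complex_of_real m * complex_of_real (sin s)))"
      unfolding rot_def r1 r2 cs sn by (simp add: cvec_def c)
    also have "\<dots> = complex_of_real (v i) + complex_of_real ch * complex_of_real m * complex_of_real (a i) + \<i> * (- (complex_of_real m * complex_of_real sh) * complex_of_real (b i))"
      using sc1 by algebra
    also have "\<dots> = complex_of_real (x i) + \<i> * complex_of_real (y i)"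
      by (simp add: xi yi)
    finally show "rot d (complex_of_real s + \<i> * complex_of_real (sth d v0 x y)) (sa d v0 x y) (sb d y) (cvec (scc d v0 s x y)) i
       = complex_of_real (x i) + \<i> * complex_of_real (y i)"
      by (simp add: th_def a_def b_def c_def)
  qed
qed



lemma NEG:
  assumes d2: "d \<ge> 2" and ab: "C1c d a b" and vv: "v \<in> vec_sp d"
    and va: "bform d v a = 0" and vb: "bform d v b = 0"
  shows "bform d v v \<le> 0" "bform d v v = 0 \<Longrightarrow> v = (\<lambda>_. 0)"
proof -
  define D where "D = a 0 * b d - a d * b 0"
  have Dp: "D > 0" using ab by (simp add: C1c_def D_def)
  have o: "bform d a a = 1" "bform d b b = 1" "bform d a b = 0" "bform d b a = 0"
    using ab by (simp_all add: C1c_def bform_sym[of d b a])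
  have vs: "bform d a v = 0" "bform d b v = 0" using va vb by (simp_all add: bform_sym)
  define l where "l = (b 0 * v d - v 0 * b d) / D"
  define mu where "mu = (a d * v 0 - a 0 * v d) / D"
  define w where "w = (\<lambda>i. l * a i + mu * b i + v i)"
  have w0: "w 0 = 0"
  proof -
    have "w 0 = (a 0 * (b 0 * v d - v 0 * b d) + b 0 * (a d * v 0 - a 0 * v d) + v 0 * D) / D"
      using Dp by (simp add: w_def l_def mu_def field_simps)
    also have "a 0 * (b 0 * v d - v 0 * b d) + b 0 * (a d * v 0 - a 0 * v d) + v 0 * D = 0"
      by (simp add: D_def algebra_simps)
    finally show ?thesis by simp
  qed
  have wd: "w d = 0"
  proof -
    have "w d = (a d * (b 0 * v d - v 0 * b d) + b d * (a d * v 0 - a 0 * v d) + v d * D) / D"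
      using Dp by (simp add: w_def l_def mu_def field_simps)
    also have "a d * (b 0 * v d - v 0 * b d) + b d * (a d * v 0 - a 0 * v d) + v d * D = 0"
      by (simp add: D_def algebra_simps)
    finally show ?thesis by simp
  qed
  have ww: "bform d w w = l * l + mu * mu + bform d v v"
    unfolding w_def by (simp only: bform_lin; simp add: o va vb vs algebra_simps)
  have ww2: "bform d w w = - (\<Sum>j\<in>{1..d-1}. w j * w j)"
    by (simp add: bform_def w0 wd)
  have sq: "(\<Sum>j\<in>{1..d-1}. w j * w j) \<ge> 0" by (intro sum_nonneg) simp
  have ll: "l * l + mu * mu \<ge> 0" by simp
  show le: "bform d v v \<le> 0" using ww ww2 sq ll by linarith
  assume z: "bform d v v = 0"
  then have "l * l + mu * mu = 0" using ww ww2 sq ll by linarith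
  then have l0: "l = 0" and m0: "mu = 0" by (simp_all add: add_nonneg_eq_0_iff)
  have "(\<Sum>j\<in>{1..d-1}. w j * w j) = 0" using ww ww2 sq ll z l0 m0 by linarith
  then have "\<forall>j\<in>{1..d-1}. w j * w j = 0" by (subst (asm) sum_nonneg_eq_0_iff) auto
  then have wj: "j \<in> {1..d-1} \<Longrightarrow> v j = 0" for j by (simp add: w_def l0 m0)
  show "v = (\<lambda>_. 0)"
  proof
    fix j
    show "v j = 0"
    proof (cases "j = 0 \<or> j = d")
      case True then show ?thesis using w0 wd by (auto simp: w_def l0 m0)
    next
      case False
      show ?thesis
      proof (cases "j > d")
        case True then show ?thesis using vv by (simp add: vec_sp_def)
      next
        case False2: False
        then show ?thesis using False wj by auto
      qed
    qed
  qed
qed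

lemma ROTB:
  assumes "\<gamma> * \<gamma> + \<delta> * \<delta> = (1::real)"
  shows "rot d s (\<lambda>i. \<gamma> * a i + \<delta> * b i) (\<lambda>i. \<gamma> * b i - \<delta> * a i) v = rot d s a b v"
proof
  fix i
  define A where "A = bform d (\<lambda>k. complex_of_real (a k)) v"
  define B where "B = bform d (\<lambda>k. complex_of_real (b k)) v"
  have e1: "bform d (\<lambda>k. complex_of_real \<gamma> * complex_of_real (a k) + complex_of_real \<delta> * complex_of_real (b k)) v = complex_of_real \<gamma> * A + complex_of_real \<delta> * B"
    unfolding A_def B_def by (simp only: bform_lin)
  have e2: "bform d (\<lambda>k. complex_of_real \<gamma> * complex_of_real (b k) - complex_of_real \<delta> * complex_of_real (a k)) v = complex_of_real \<gamma> * B - complex_of_real \<delta> * A"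
    unfolding A_def B_def by (simp only: bform_lin)
  have g: "complex_of_real \<gamma> * complex_of_real \<gamma> + complex_of_real \<delta> * complex_of_real \<delta> = 1"
    using assms by (simp flip: of_real_mult of_real_add)
  show "rot d s (\<lambda>i. \<gamma> * a i + \<delta> * b i) (\<lambda>i. \<gamma> * b i - \<delta> * a i) v i = rot d s a b v i"
    unfolding rot_def of_real_add of_real_mult of_real_diff
    unfolding e1 e2 A_def[symmetric] B_def[symmetric]
    using g by algebra
qed

lemma XC_parts:
  assumes "u \<in> vec_sp d" "bform d u u = 1"
  shows "(\<lambda>i. Re (u i)) \<in> vec_sp d" "(\<lambda>i. Im (u i)) \<in> vec_sp d"
    "bform d (\<lambda>i. Re (u i)) (\<lambda>i. Re (u i)) - bform d (\<lambda>i. Im (u i)) (\<lambda>i. Im (u i)) = 1"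
    "bform d (\<lambda>i. Re (u i)) (\<lambda>i. Im (u i)) = 0"
proof -
  show "(\<lambda>i. Re (u i)) \<in> vec_sp d" "(\<lambda>i. Im (u i)) \<in> vec_sp d" using assms(1) by (auto simp: vec_sp_def)
  define x where "x = (\<lambda>i. Re (u i))"
  define y where "y = (\<lambda>i. Im (u i))"
  have u: "u = (\<lambda>i. complex_of_real (x i) + \<i> * complex_of_real (y i))"
    by (rule ext) (simp add: x_def y_def complex_eq_iff)
  have "bform d u u = complex_of_real (bform d x x - bform d y y) + \<i> * complex_of_real (2 * bform d x y)"
    unfolding u by (simp only: bform_lin bform_of_real; simp add: bform_sym[of d y x] algebra_simps)
  then have "complex_of_real (bform d x x - bform d y y) + \<i> * complex_of_real (2 * bform d x y) = 1"
    using assms(2) by simp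
  then have "bform d x x - bform d y y = 1 \<and> bform d x y = 0" by (simp add: complex_eq_iff)
  then show "bform d (\<lambda>i. Re (u i)) (\<lambda>i. Re (u i)) - bform d (\<lambda>i. Im (u i)) (\<lambda>i. Im (u i)) = 1"
    "bform d (\<lambda>i. Re (u i)) (\<lambda>i. Im (u i)) = 0" by (simp_all add: x_def y_def)
qed



lemma BASE:
  assumes d2: "d \<ge> 2" and ab: "C1c d a0 b0" and cX: "c \<in> Xr d" and sig: "Im \<sigma> > 0"
    and u_def: "u = rot d \<sigma> a0 b0 (cvec c)" and x_def: "x = (\<lambda>i. Re (u i))" and y_def: "y = (\<lambda>i. Im (u i))"
    and v0_def: "v0 = (\<lambda>i. c i - bform d a0 c * a0 i - bform d b0 c * b0 i)"
  shows "sD d v0 x y" "sth d v0 x y = Im \<sigma>" "rot d t (sa d v0 x y) (sb d y) = rot d t a0 b0"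
    "bform d (sv1 d v0 y) (sv1 d v0 y) \<noteq> 0 \<or> v0 = (\<lambda>_. 0)"
proof -
  define \<alpha> where "\<alpha> = bform d a0 c"
  define \<beta> where "\<beta> = bform d b0 c"
  define s where "s = Re \<sigma>"
  define \<theta> where "\<theta> = Im \<sigma>"
  define C where "C = (exp \<theta> + exp (- \<theta>)) / 2"
  define S where "S = (exp \<theta> - exp (- \<theta>)) / 2"
  define A where "A = \<alpha> * cos s + \<beta> * sin s"
  define B where "B = \<beta> * cos s - \<alpha> * sin s"
  define M2 where "M2 = \<alpha> * \<alpha> + \<beta> * \<beta>"
  have o: "bform d a0 a0 = 1" "bform d b0 b0 = 1" "bform d a0 b0 = 0" "bform d b0 a0 = 0"
    using ab by (simp_all add: C1c_def bform_sym[of d b0 a0])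
  have abv: "a0 \<in> vec_sp d" "b0 \<in> vec_sp d" using ab by (simp_all add: C1c_def)
  have cv: "c \<in> vec_sp d" and cc: "bform d c c = 1" using cX by (simp_all add: Xr_def)
  have ca: "bform d c a0 = \<alpha>" "bform d c b0 = \<beta>" by (simp_all add: \<alpha>_def \<beta>_def bform_sym)
  have v0: "v0 = (\<lambda>i. c i - \<alpha> * a0 i - \<beta> * b0 i)" by (simp add: v0_def \<alpha>_def \<beta>_def)
  have v0v: "v0 \<in> vec_sp d" using abv cv by (simp add: v0 vec_sp_def)
  have v0a: "bform d v0 a0 = 0" "bform d v0 b0 = 0"
    unfolding v0 by (simp only: bform_lin; simp add: o ca)+
  have v0v0: "bform d v0 v0 = 1 - M2"
    unfolding v0 by (simp only: bform_lin; simp add: o ca cc \<alpha>_def[symmetric] \<beta>_def[symmetric] M2_def algebra_simps)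
  have neg: "bform d v0 v0 \<le> 0" "bform d v0 v0 = 0 \<Longrightarrow> v0 = (\<lambda>_. 0)"
    using NEG[OF d2 ab v0v v0a] by auto
  have M2: "M2 \<ge> 1" using neg(1) v0v0 by simp
  have AB: "A * A + B * B = M2"
  proof -
    have "sin s * sin s + cos s * cos s = 1" using sin_cos_squared_add[of s] by (simp add: power2_eq_square)
    then show ?thesis unfolding A_def B_def M2_def by algebra
  qed
  have thpos: "\<theta> > 0" using sig by (simp add: \<theta>_def)
  have Spos: "S > 0" using thpos by (simp add: S_def)
  have Cpos: "C > 0" by (simp add: C_def add_pos_pos)
  have CS: "C * C = 1 + S * S"
  proof -
    have "exp \<theta> * exp (- \<theta>) = 1" by (simp add: exp_minus)
    then show ?thesis by (simp add: C_def S_def field_simps power2_eq_square)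
  qed
  have sc: "sin \<sigma> = complex_of_real (sin s * C) + \<i> * complex_of_real (cos s * S)"
    by (simp add: complex_eq_iff Re_sin Im_sin s_def \<theta>_def C_def S_def)
  have cs: "cos \<sigma> = complex_of_real (cos s * C) - \<i> * complex_of_real (sin s * S)"
    by (simp add: complex_eq_iff Re_cos Im_cos s_def \<theta>_def C_def S_def field_simps)
  have ui: "u i = complex_of_real (c i) + sin \<sigma> * (complex_of_real (a0 i) * complex_of_real \<beta> - complex_of_real (b0 i) * complex_of_real \<alpha>)
      - (1 - cos \<sigma>) * (complex_of_real (a0 i) * complex_of_real \<alpha> + complex_of_real (b0 i) * complex_of_real \<beta>)" for i
    by (simp add: u_def rot_def cvec_def bform_of_real \<alpha>_def \<beta>_def)
  have ci: "c i = v0 i + \<alpha> * a0 i + \<beta> * b0 i" for i by (simp add: v0)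
  have ux: "x = (\<lambda>i. v0 i + C * A * a0 i + C * B * b0 i)"
  proof
    fix i
    show "x i = v0 i + C * A * a0 i + C * B * b0 i"
      unfolding x_def ui sc cs by (simp add: ci A_def B_def algebra_simps)
  qed
  have uy: "y = (\<lambda>i. S * B * a0 i - S * A * b0 i)"
  proof
    fix i
    show "y i = S * B * a0 i - S * A * b0 i"
      unfolding y_def ui sc cs by (simp add: A_def B_def algebra_simps)
  qed
  have yy: "bform d y y = S * S * M2"
  proof -
    have "bform d y y = S * S * (A * A + B * B)"
      unfolding uy by (simp only: bform_lin; simp add: o algebra_simps)
    then show ?thesis using AB by simp
  qed
  have Ypos: "bform d y y > 0" using yy Spos M2 by simp
  have v0y: "bform d v0 y = 0" unfolding uy by (simp only: bform_lin; simp add: v0a)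
  have v0x: "bform d v0 x = bform d v0 v0" unfolding ux by (simp only: bform_lin; simp add: v0a)
  have sv1: "sv1 d v0 y = v0" by (simp add: sv1_def v0y)
  show "bform d (sv1 d v0 y) (sv1 d v0 y) \<noteq> 0 \<or> v0 = (\<lambda>_. 0)" using neg(2) by (auto simp: sv1)
  have sv: "sv d v0 x y = v0"
  proof (cases "bform d v0 v0 = 0")
    case True then show ?thesis unfolding sv_def sv1 using neg(2) by simp
  next
    case False then show ?thesis by (simp add: sv_def sv1 v0x)
  qed
  define m where "m = sqrt M2"
  have mpos: "m > 0" using M2 by (simp add: m_def)
  have mm: "m * m = M2" using M2 by (simp add: m_def)
  have sm: "sm d v0 x y = m" by (simp add: sm_def sv v0v0 m_def)
  have sqY: "sqrt (bform d y y) = S * m"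
    using Spos M2 by (simp add: yy m_def real_sqrt_mult)
  have ssh: "ssh d v0 x y = S" using mpos by (simp add: ssh_def sqY sm)
  have sch: "sch d v0 x y = C"
  proof -
    have "sqrt (1 + S\<^sup>2) = sqrt (C * C)" using CS by (simp add: power2_eq_square)
    then show ?thesis using Cpos by (simp add: sch_def ssh)
  qed
  have SC: "S + C = exp \<theta>" by (simp add: S_def C_def field_simps)
  show "sth d v0 x y = Im \<sigma>" by (simp add: sth_def ssh sch SC \<theta>_def)
  have sa: "sa d v0 x y = (\<lambda>i. (A / m) * a0 i + (B / m) * b0 i)"
  proof
    fix i show "sa d v0 x y i = (A / m) * a0 i + (B / m) * b0 i"
      unfolding sa_def sv sch sm using Cpos mpos by (simp add: ux field_simps)
  qed
  have sb: "sb d y = (\<lambda>i. (A / m) * b0 i - (B / m) * a0 i)"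
  proof
    fix i show "sb d y i = (A / m) * b0 i - (B / m) * a0 i"
      unfolding sb_def sqY using Spos mpos by (simp add: uy field_simps)
  qed
  have gd: "(A / m) * (A / m) + (B / m) * (B / m) = 1"
  proof -
    have "(A / m) * (A / m) + (B / m) * (B / m) = (A * A + B * B) / (m * m)" by (simp add: add_divide_distrib)
    then show ?thesis using AB mm M2 by simp
  qed
  show "rot d t (sa d v0 x y) (sb d y) = rot d t a0 b0"
    unfolding sa sb by (rule ext) (rule ROTB[OF gd])
  have ori0: "a0 0 * b0 d - a0 d * b0 0 > 0" using ab by (simp add: C1c_def)
  have "(x d - v0 d) * y 0 - (x 0 - v0 0) * y d = C * S * (A * A + B * B) * (a0 0 * b0 d - a0 d * b0 0)"
    unfolding ux uy by simp algebra
  then have "(x d - v0 d) * y 0 - (x 0 - v0 0) * y d > 0"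
    using Cpos Spos AB M2 ori0 by simp
  then show "sD d v0 x y" using Ypos neg(1) by (simp add: sD_def sv)
qed



definition xR :: "(nat \<Rightarrow> complex) \<Rightarrow> (nat \<Rightarrow> real)" where "xR u = (\<lambda>i. Re (u i))"
definition yI :: "(nat \<Rightarrow> complex) \<Rightarrow> (nat \<Rightarrow> real)" where "yI u = (\<lambda>i. Im (u i))"
definition sg :: "nat \<Rightarrow> real \<Rightarrow> (nat\<Rightarrow>real) \<Rightarrow> (nat \<Rightarrow> complex) \<Rightarrow> complex" where
  "sg d s v0 u = complex_of_real s + \<i> * complex_of_real (sth d v0 (xR u) (yI u))"

fun Op :: "nat \<Rightarrow> (nat \<Rightarrow> (complex \<times> cmat) list) \<Rightarrow> (nat \<Rightarrow> real) \<Rightarrow> (nat \<Rightarrow> nat \<Rightarrow> real) \<Rightarrow> nat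
    \<Rightarrow> (nat \<Rightarrow> nat \<Rightarrow> complex) \<Rightarrow> (nat \<Rightarrow> complex) \<Rightarrow> (nat \<Rightarrow> complex)" where
  "Op d ini s v0 0 w v = v"
| "Op d ini s v0 (Suc j) w v = (let U = pinv d (ini (Suc j)) (Op d ini s v0 j w (w (Suc j))) in
     rot d (- sg d (s (Suc j)) (v0 (Suc j)) U) (sa d (v0 (Suc j)) (xR U) (yI U)) (sb d (yI U))
       (pinv d (ini (Suc j)) (Op d ini s v0 j w v)))"

definition UU :: "nat \<Rightarrow> (nat \<Rightarrow> (complex \<times> cmat) list) \<Rightarrow> (nat \<Rightarrow> real) \<Rightarrow> (nat \<Rightarrow> nat \<Rightarrow> real) \<Rightarrow> nat
    \<Rightarrow> (nat \<Rightarrow> nat \<Rightarrow> complex) \<Rightarrow> (nat \<Rightarrow> complex)" where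
  "UU d ini s v0 j w = pinv d (ini j) (Op d ini s v0 (j - 1) w (w j))"

lemma Op_Suc: "Op d ini s v0 (Suc j) w v = (let U = UU d ini s v0 (Suc j) w in
     rot d (- sg d (s (Suc j)) (v0 (Suc j)) U) (sa d (v0 (Suc j)) (xR U) (yI U)) (sb d (yI U))
       (pinv d (ini (Suc j)) (Op d ini s v0 j w v)))"
  by (simp add: UU_def)

declare Op.simps(2)[simp del]

definition Lnew :: "nat \<Rightarrow> (nat \<Rightarrow> (complex \<times> cmat) list) \<Rightarrow> (nat \<Rightarrow> real) \<Rightarrow> (nat \<Rightarrow> nat \<Rightarrow> real)
    \<Rightarrow> (nat \<Rightarrow> nat \<Rightarrow> complex) \<Rightarrow> nat \<Rightarrow> cmat" where
  "Lnew d ini s v0 w j = (let U = UU d ini s v0 j w in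
     FF d (ini j @ [(sg d (s j) (v0 j) U, mscale 1 (ell d (sa d (v0 j) (xR U) (yI U)) (sb d (yI U))))]) (mid d))"

definition cnew :: "nat \<Rightarrow> (nat \<Rightarrow> (complex \<times> cmat) list) \<Rightarrow> (nat \<Rightarrow> real) \<Rightarrow> (nat \<Rightarrow> nat \<Rightarrow> real)
    \<Rightarrow> (nat \<Rightarrow> nat \<Rightarrow> complex) \<Rightarrow> nat \<Rightarrow> (nat \<Rightarrow> real)" where
  "cnew d ini s v0 w j = (let U = UU d ini s v0 j w in scc d (v0 j) (s j) (xR U) (yI U))"

lemma lprod_act: "mapp d (lprod d L (Suc j)) v = mapp d (lprod d L j) (mapp d (L (Suc j)) v)"
  by (simp add: mapp_mmul)

lemma C1c_C1: "C1c d a b \<Longrightarrow> ell d a b \<in> C1 d"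
  unfolding C1_def C1c_def by blast

lemma C1c_Cplus: "C1c d a b \<Longrightarrow> mscale 1 (ell d a b) \<in> Cplus d"
  unfolding Cplus_def using C1c_C1[of d a b] by (intro CollectI exI[of _ 1] exI[of _ "ell d a b"]) simp

lemma G0plus_FF: "ps \<noteq> [] \<Longrightarrow> (\<forall>(t, M) \<in> set ps. Im t > 0 \<and> M \<in> Cplus d) \<Longrightarrow> FF d ps (mid d) \<in> G0plus d"
  unfolding G0plus_def FF_def by blast

lemma GOOD:
  assumes d2: "d \<ge> 2"
    and ini: "\<forall>j\<in>{1..n}. \<forall>(t, M) \<in> set (ini j). Im t > 0 \<and> M \<in> Cplus d"
    and v0v: "\<forall>j\<in>{1..n}. v0 j \<in> vec_sp d"
    and wX: "w \<in> Xcn d n"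
    and good: "\<forall>j\<in>{1..n}. sD d (v0 j) (xR (UU d ini s v0 j w)) (yI (UU d ini s v0 j w))"
  shows "w \<in> Tplus d n"
proof -
  have d1: "d \<ge> 1" using d2 by simp
  have iniC: "\<forall>(t, M) \<in> set (ini j). M \<in> Cplus d" if "j \<in> {1..n}" for j using ini that by auto
  have wj: "w j \<in> vec_sp d" "bform d (w j) (w j) = 1" if "j \<in> {1..n}" for j
    using wX that by (auto simp: Xcn_def Xc_def)
  define L' where "L' = Lnew d ini s v0 w"
  define P where "P j \<longleftrightarrow> (\<forall>v\<in>vec_sp d. Op d ini s v0 j w v \<in> vec_sp d \<and> mapp d (lprod d L' j) (Op d ini s v0 j w v) = v)
     \<and> (\<forall>v\<in>vec_sp d. \<forall>v'\<in>vec_sp d. bform d (Op d ini s v0 j w v) (Op d ini s v0 j w v') = bform d v v')" for j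
  have SECj: "UU d ini s v0 j w \<in> vec_sp d \<and> C1c d (sa d (v0 j) (xR (UU d ini s v0 j w)) (yI (UU d ini s v0 j w))) (sb d (yI (UU d ini s v0 j w)))
      \<and> sth d (v0 j) (xR (UU d ini s v0 j w)) (yI (UU d ini s v0 j w)) > 0
      \<and> cnew d ini s v0 w j \<in> Xr d
      \<and> rot d (sg d (s j) (v0 j) (UU d ini s v0 j w)) (sa d (v0 j) (xR (UU d ini s v0 j w)) (yI (UU d ini s v0 j w))) (sb d (yI (UU d ini s v0 j w)))
          (cvec (cnew d ini s v0 w j)) = UU d ini s v0 j w"
    if j: "j \<in> {1..n}" and Pj: "P (j - 1)" for j
  proof -
    define U where "U = UU d ini s v0 j w"
    have O1: "Op d ini s v0 (j - 1) w (w j) \<in> vec_sp d" using Pj wj[OF j] by (simp add: P_def)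
    have O2: "bform d (Op d ini s v0 (j - 1) w (w j)) (Op d ini s v0 (j - 1) w (w j)) = 1"
      using Pj wj[OF j] by (simp add: P_def)
    have Uv: "U \<in> vec_sp d" using pinv_vec[OF O1] by (simp add: U_def UU_def)
    have UU1: "bform d U U = 1" using pinv_form[OF d1 iniC[OF j] O1 O1] O2 by (simp add: U_def UU_def)
    note parts = XC_parts[OF Uv UU1]
    have sd: "sD d (v0 j) (xR U) (yI U)" using good j by (simp add: U_def)
    note S12 = SEC(1,2)[OF d2 v0v[rule_format, OF j] parts(1,2,3,4) sd[unfolded xR_def yI_def]]
    note S3 = SEC(3)[OF d2 v0v[rule_format, OF j] parts(1,2,3,4) sd[unfolded xR_def yI_def], of "s j"]
    note S4 = SEC(4)[OF d2 v0v[rule_format, OF j] parts(1,2,3,4) sd[unfolded xR_def yI_def], of "s j"]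
    note S = S12 S3 S4
    have Ueq: "(\<lambda>i. complex_of_real (Re (U i)) + \<i> * complex_of_real (Im (U i))) = U"
      by (rule ext) (simp add: complex_eq_iff)
    show ?thesis using S Uv Ueq unfolding U_def[symmetric]
      by (simp add: cnew_def sg_def xR_def yI_def Let_def U_def[symmetric])
  qed
  have Pall: "P j" if "j \<le> n" for j
    using that
  proof (induction j)
    case 0 then show ?case by (simp add: P_def mapp_mid)
  next
    case (Suc j)
    have j: "Suc j \<in> {1..n}" using Suc.prems by simp
    have Pj: "P j" using Suc by simp
    define U where "U = UU d ini s v0 (Suc j) w"
    define a' where "a' = sa d (v0 (Suc j)) (xR U) (yI U)"
    define b' where "b' = sb d (yI U)"
    define sg' where "sg' = sg d (s (Suc j)) (v0 (Suc j)) U"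
    have S: "C1c d a' b'" using SECj[OF j] Pj by (simp add: U_def a'_def b'_def)
    have o: "orthon d a' b'" and abv: "a' \<in> vec_sp d" "b' \<in> vec_sp d" using S by (auto simp: C1c_def orthon_def)
    have Op: "Op d ini s v0 (Suc j) w v = rot d (- sg') a' b' (pinv d (ini (Suc j)) (Op d ini s v0 j w v))" for v
      by (simp add: Op_Suc Let_def U_def a'_def b'_def sg'_def)
    have L': "mapp d (L' (Suc j)) y = mapp d (FF d (ini (Suc j)) (mid d)) (rot d sg' a' b' y)" if "y \<in> vec_sp d" for y
      using that FF_snoc[OF that] mapp_rot[OF d1 o abv that]
      by (simp add: L'_def Lnew_def Let_def U_def[symmetric] a'_def[symmetric] b'_def[symmetric] sg'_def[symmetric] mscale_mscale)
    have A: "Op d ini s v0 (Suc j) w v \<in> vec_sp d \<and> mapp d (lprod d L' (Suc j)) (Op d ini s v0 (Suc j) w v) = v"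
      if v: "v \<in> vec_sp d" for v
    proof -
      have p1: "Op d ini s v0 j w v \<in> vec_sp d" "mapp d (lprod d L' j) (Op d ini s v0 j w v) = v"
        using Pj v by (auto simp: P_def)
      have p2: "pinv d (ini (Suc j)) (Op d ini s v0 j w v) \<in> vec_sp d" using pinv_vec[OF p1(1)] .
      have "mapp d (lprod d L' (Suc j)) (Op d ini s v0 (Suc j) w v)
          = mapp d (lprod d L' j) (mapp d (FF d (ini (Suc j)) (mid d)) (rot d sg' a' b' (rot d (- sg') a' b' (pinv d (ini (Suc j)) (Op d ini s v0 j w v)))))"
        unfolding lprod_act Op using L'[OF rot_vec[OF abv p2]] by simp
      also have "\<dots> = v"
        using rot_inv[OF o, of "- sg'"] pinv_r[OF d1 iniC[OF j] p1(1)] p1(2) by simp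
      finally show ?thesis using rot_vec[OF abv p2] by (simp add: Op)
    qed
    have B: "bform d (Op d ini s v0 (Suc j) w v) (Op d ini s v0 (Suc j) w v') = bform d v v'"
      if "v \<in> vec_sp d" "v' \<in> vec_sp d" for v v'
    proof -
      have p1: "Op d ini s v0 j w v \<in> vec_sp d" "Op d ini s v0 j w v' \<in> vec_sp d"
        "bform d (Op d ini s v0 j w v) (Op d ini s v0 j w v') = bform d v v'"
        using Pj that by (auto simp: P_def)
      show ?thesis unfolding Op rot_form[OF o] pinv_form[OF d1 iniC[OF j] p1(1,2)] by (rule p1(3))
    qed
    show ?case using A B by (simp add: P_def)
  qed
  show "w \<in> Tplus d n"
    unfolding Tplus_def
  proof (intro CollectI conjI exI[of _ L'] exI[of _ "cnew d ini s v0 w"] ballI wX)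
    fix j assume j: "j \<in> {1..n}"
    then obtain j' where j': "j = Suc j'" and jn: "j' < n" by (cases j) auto
    have Pj: "P (j - 1)" using Pall jn j' by simp
    note S = SECj[OF j Pj]
    define U where "U = UU d ini s v0 j w"
    show "L' j \<in> G0plus d"
      unfolding L'_def Lnew_def Let_def
      by (rule G0plus_FF) (use ini j S C1c_Cplus in \<open>auto simp: sg_def\<close>)
    show "cnew d ini s v0 w j \<in> Xr d" using S by simp
    have o: "orthon d (sa d (v0 j) (xR U) (yI U)) (sb d (yI U))" and abv: "sa d (v0 j) (xR U) (yI U) \<in> vec_sp d" "sb d (yI U) \<in> vec_sp d"
      using S by (auto simp: C1c_def orthon_def U_def)
    have cv: "cvec (cnew d ini s v0 w j) \<in> vec_sp d" using S by (simp add: Xr_def vec_sp_def cvec_def)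
    have O1: "Op d ini s v0 j' w (w j) \<in> vec_sp d" "mapp d (lprod d L' j') (Op d ini s v0 j' w (w j)) = w j"
      using Pj wj[OF j] j' by (auto simp: P_def)
    have "mapp d (lprod d L' j) (cvec (cnew d ini s v0 w j))
       = mapp d (lprod d L' j') (mapp d (FF d (ini j) (mid d)) (rot d (sg d (s j) (v0 j) U) (sa d (v0 j) (xR U) (yI U)) (sb d (yI U)) (cvec (cnew d ini s v0 w j))))"
      unfolding j' lprod_act using FF_snoc[OF cv] mapp_rot[OF d1 o abv cv]
      by (simp add: L'_def Lnew_def Let_def U_def[symmetric] j'[symmetric] mscale_mscale)
    also have "\<dots> = mapp d (lprod d L' j') (mapp d (FF d (ini j) (mid d)) U)" using S by (simp add: U_def)
    also have "\<dots> = w j" using pinv_r[OF d1 iniC[OF j] O1(1)] O1(2) by (simp add: U_def UU_def j')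
    finally show "w j = mapp d (lprod d L' j) (cvec (cnew d ini s v0 w j))" by simp
  qed
qed



lemma BASEZ:
  assumes d2: "d \<ge> 2"
    and ini: "\<forall>j\<in>{1..n}. \<forall>(t, M) \<in> set (ini j). M \<in> Cplus d"
    and ab: "\<forall>j\<in>{1..n}. C1c d (a0 j) (b0 j)"
    and im: "\<forall>j\<in>{1..n}. Im (sig j) > 0"
    and cX: "\<forall>j\<in>{1..n}. c j \<in> Xr d"
    and Lact: "\<forall>j\<in>{1..n}. \<forall>v\<in>vec_sp d. mapp d (L j) v = mapp d (FF d (ini j) (mid d)) (rot d (sig j) (a0 j) (b0 j) v)"
    and zj: "\<forall>j\<in>{1..n}. z j = mapp d (lprod d L j) (cvec (c j))"
    and s_def: "s = (\<lambda>j. Re (sig j))"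
    and v0_def: "v0 = (\<lambda>j i. c j i - bform d (a0 j) (c j) * a0 j i - bform d (b0 j) (c j) * b0 j i)"
  shows "\<forall>j\<in>{1..n}. UU d ini s v0 j z = rot d (sig j) (a0 j) (b0 j) (cvec (c j))
      \<and> sD d (v0 j) (xR (UU d ini s v0 j z)) (yI (UU d ini s v0 j z))
      \<and> (bform d (sv1 d (v0 j) (yI (UU d ini s v0 j z))) (sv1 d (v0 j) (yI (UU d ini s v0 j z))) \<noteq> 0 \<or> v0 j = (\<lambda>_. 0))"
proof -
  have d1: "d \<ge> 1" using d2 by simp
  define Q where "Q j \<longleftrightarrow> (\<forall>v\<in>vec_sp d. Op d ini s v0 j z (mapp d (lprod d L j) v) = v)" for j
  have Ufacts: "UU d ini s v0 j z = rot d (sig j) (a0 j) (b0 j) (cvec (c j))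
      \<and> sD d (v0 j) (xR (UU d ini s v0 j z)) (yI (UU d ini s v0 j z))
      \<and> (bform d (sv1 d (v0 j) (yI (UU d ini s v0 j z))) (sv1 d (v0 j) (yI (UU d ini s v0 j z))) \<noteq> 0 \<or> v0 j = (\<lambda>_. 0))
      \<and> sg d (s j) (v0 j) (UU d ini s v0 j z) = sig j
      \<and> (\<forall>t. rot d t (sa d (v0 j) (xR (UU d ini s v0 j z)) (yI (UU d ini s v0 j z))) (sb d (yI (UU d ini s v0 j z))) = rot d t (a0 j) (b0 j))"
    if j: "j \<in> {1..n}" and Qj: "Q (j - 1)" for j
  proof -
    obtain j' where j': "j = Suc j'" using j by (cases j) auto
    have abj: "C1c d (a0 j) (b0 j)" using ab j by simp
    have o: "orthon d (a0 j) (b0 j)" and abv: "a0 j \<in> vec_sp d" "b0 j \<in> vec_sp d" using abj by (auto simp: C1c_def orthon_def)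
    have cv: "cvec (c j) \<in> vec_sp d" using cX j by (simp add: Xr_def vec_sp_def cvec_def)
    have iniC: "\<forall>(t, M) \<in> set (ini j). M \<in> Cplus d" using ini j by auto
    have "Op d ini s v0 j' z (z j) = mapp d (L j) (cvec (c j))"
      using Qj mapp_vec zj j by (simp add: Q_def j' mapp_mmul)
    also have "\<dots> = mapp d (FF d (ini j) (mid d)) (rot d (sig j) (a0 j) (b0 j) (cvec (c j)))"
      using Lact j cv by simp
    finally have "UU d ini s v0 j z = rot d (sig j) (a0 j) (b0 j) (cvec (c j))"
      using pinv_l[OF d1 iniC rot_vec[OF abv cv]] by (simp add: UU_def j')
    moreover note B = BASE[OF d2 abj, of "c j" "sig j" "UU d ini s v0 j z" "xR (UU d ini s v0 j z)" "yI (UU d ini s v0 j z)" "v0 j"]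
    moreover have "c j \<in> Xr d" "Im (sig j) > 0" using cX im j by auto
    ultimately show ?thesis
      by (simp add: xR_def yI_def v0_def sg_def s_def complex_eq_iff)
  qed
  have Qall: "Q j" if "j \<le> n" for j
    using that
  proof (induction j)
    case 0 then show ?case by (simp add: Q_def mapp_mid)
  next
    case (Suc j)
    have j: "Suc j \<in> {1..n}" using Suc.prems by simp
    have Qj: "Q j" using Suc by simp
    note F = Ufacts[OF j, simplified, OF Qj]
    have abj: "C1c d (a0 (Suc j)) (b0 (Suc j))" using ab j by simp
    have o: "orthon d (a0 (Suc j)) (b0 (Suc j))" and abv: "a0 (Suc j) \<in> vec_sp d" "b0 (Suc j) \<in> vec_sp d"
      using abj by (auto simp: C1c_def orthon_def)
    have iniC: "\<forall>(t, M) \<in> set (ini (Suc j)). M \<in> Cplus d" using ini j by auto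
    show ?case unfolding Q_def
    proof
      fix v :: "nat \<Rightarrow> complex" assume v: "v \<in> vec_sp d"
      have e1: "sg d (s (Suc j)) (v0 (Suc j)) (UU d ini s v0 (Suc j) z) = sig (Suc j)" using F by blast
      have e2: "rot d (- sig (Suc j)) (sa d (v0 (Suc j)) (xR (UU d ini s v0 (Suc j) z)) (yI (UU d ini s v0 (Suc j) z))) (sb d (yI (UU d ini s v0 (Suc j) z)))
          = rot d (- sig (Suc j)) (a0 (Suc j)) (b0 (Suc j))" using F by blast
      have e3: "Op d ini s v0 j z (mapp d (lprod d L (Suc j)) v) = mapp d (L (Suc j)) v"
        using Qj mapp_vec by (simp add: Q_def mapp_mmul)
      have "Op d ini s v0 (Suc j) z (mapp d (lprod d L (Suc j)) v)
         = rot d (- sig (Suc j)) (a0 (Suc j)) (b0 (Suc j)) (pinv d (ini (Suc j)) (mapp d (L (Suc j)) v))"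
        by (simp only: Op_Suc Let_def e1 e2 e3)
      also have "\<dots> = v" using Lact j v pinv_l[OF d1 iniC rot_vec[OF abv v]] rot_inv[OF o] by simp
      finally show "Op d ini s v0 (Suc j) z (mapp d (lprod d L (Suc j)) v) = v" .
    qed
  qed
  show ?thesis
  proof
    fix j assume j: "j \<in> {1..n}"
    then have "j - 1 \<le> n" by auto
    then have "Q (j - 1)" by (rule Qall)
    then show "UU d ini s v0 j z = rot d (sig j) (a0 j) (b0 j) (cvec (c j))
      \<and> sD d (v0 j) (xR (UU d ini s v0 j z)) (yI (UU d ini s v0 j z))
      \<and> (bform d (sv1 d (v0 j) (yI (UU d ini s v0 j z))) (sv1 d (v0 j) (yI (UU d ini s v0 j z))) \<noteq> 0 \<or> v0 j = (\<lambda>_. 0))"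
      using Ufacts[OF j] by blast
  qed
qed



definition vlim :: "'b filter \<Rightarrow> ('b \<Rightarrow> nat \<Rightarrow> 'a::topological_space) \<Rightarrow> (nat \<Rightarrow> 'a) \<Rightarrow> bool" where
  "vlim F X X0 \<longleftrightarrow> (\<forall>i. ((\<lambda>w. X w i) \<longlongrightarrow> X0 i) F)"

lemma vlimD: "vlim F X X0 \<Longrightarrow> ((\<lambda>w. X w i) \<longlongrightarrow> X0 i) F" by (simp add: vlim_def)

lemma tendsto_bform:
  fixes X Y :: "'b \<Rightarrow> nat \<Rightarrow> 'a::real_normed_field"
  assumes "vlim F X X0" "vlim F Y Y0"
  shows "((\<lambda>w. bform d (X w) (Y w)) \<longlongrightarrow> bform d X0 Y0) F"
  unfolding bform_def using assms unfolding vlim_def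
  by (intro tendsto_intros) auto

lemma vlim_mapp: "vlim F V V0 \<Longrightarrow> vlim F (\<lambda>w. mapp d A (V w)) (mapp d A V0)"
  unfolding vlim_def mapp_def by (auto intro!: tendsto_intros)

lemma vlim_pinv: "vlim F V V0 \<Longrightarrow> vlim F (\<lambda>w. pinv d xs (V w)) (pinv d xs V0)"
proof (induction xs arbitrary: V V0)
  case Nil then show ?case by simp
next
  case (Cons x xs)
  obtain t M where x: "x = (t, M)" by (cases x)
  show ?case using Cons.IH[OF vlim_mapp[OF Cons.prems]] by (simp add: x)
qed

lemma vlim_of_real: "vlim F a a0 \<Longrightarrow> vlim F (\<lambda>w k. complex_of_real (a w k)) (\<lambda>k. complex_of_real (a0 k))"
  unfolding vlim_def by (auto intro!: tendsto_intros)

lemma vlim_rot: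
  assumes "(s \<longlongrightarrow> s0) F" "vlim F a a0" "vlim F b b0" "vlim F V V0"
  shows "vlim F (\<lambda>w. rot d (s w) (a w) (b w) (V w)) (rot d s0 a0 b0 V0)"
proof -
  note ba = tendsto_bform[OF vlim_of_real[OF assms(2)] assms(4), of d]
  note bb = tendsto_bform[OF vlim_of_real[OF assms(3)] assms(4), of d]
  have ls: "((\<lambda>w. sin (s w)) \<longlongrightarrow> sin s0) F" "((\<lambda>w. cos (s w)) \<longlongrightarrow> cos s0) F"
    using isCont_tendsto_compose[OF isCont_sin assms(1)] isCont_tendsto_compose[OF isCont_cos assms(1)] by auto
  show ?thesis unfolding vlim_def rot_def
    using assms ba bb ls unfolding vlim_def by (auto intro!: tendsto_intros)
qed

lemma sv_zero: "sv d (\<lambda>_. 0) x y = (\<lambda>_. 0)"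
  by (simp add: sv_def sv1_def bform_def)

lemma SECCONT:
  assumes D: "sD d v0 x0 y0" and nz: "bform d (sv1 d v0 y0) (sv1 d v0 y0) \<noteq> 0 \<or> v0 = (\<lambda>_. 0)"
    and lx: "vlim F x x0" and ly: "vlim F y y0"
  shows "((\<lambda>w. sth d v0 (x w) (y w)) \<longlongrightarrow> sth d v0 x0 y0) F"
    "vlim F (\<lambda>w. sa d v0 (x w) (y w)) (sa d v0 x0 y0)"
    "vlim F (\<lambda>w. sb d (y w)) (sb d y0)"
    "eventually (\<lambda>w. sD d v0 (x w) (y w)) F"
proof -
  have Y0: "bform d y0 y0 > 0" and V0: "bform d (sv d v0 x0 y0) (sv d v0 x0 y0) < 1"
    and O0: "(x0 d - sv d v0 x0 y0 d) * y0 0 - (x0 0 - sv d v0 x0 y0 0) * y0 d > 0"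
    using D by (simp_all add: sD_def)
  have lY: "((\<lambda>w. bform d (y w) (y w)) \<longlongrightarrow> bform d y0 y0) F" using tendsto_bform[OF ly ly] .
  have lv0: "vlim F (\<lambda>w. v0) v0" by (simp add: vlim_def)
  have l1: "vlim F (\<lambda>w. sv1 d v0 (y w)) (sv1 d v0 y0)"
    unfolding vlim_def sv1_def
    using tendsto_bform[OF lv0 ly] lY Y0 ly unfolding vlim_def by (auto intro!: tendsto_intros)
  have lsv: "vlim F (\<lambda>w. sv d v0 (x w) (y w)) (sv d v0 x0 y0)"
  proof (cases "v0 = (\<lambda>_. 0)")
    case True then show ?thesis by (simp add: sv_zero vlim_def)
  next
    case False
    then have nz': "bform d (sv1 d v0 y0) (sv1 d v0 y0) \<noteq> 0" using nz by simp
    show ?thesis unfolding vlim_def sv_def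
      using tendsto_bform[OF l1 lx] tendsto_bform[OF l1 l1] nz' l1 unfolding vlim_def
      by (auto intro!: tendsto_intros)
  qed
  have lV: "((\<lambda>w. bform d (sv d v0 (x w) (y w)) (sv d v0 (x w) (y w))) \<longlongrightarrow> bform d (sv d v0 x0 y0) (sv d v0 x0 y0)) F"
    using tendsto_bform[OF lsv lsv] .
  have lm: "((\<lambda>w. sm d v0 (x w) (y w)) \<longlongrightarrow> sm d v0 x0 y0) F"
    unfolding sm_def using lV by (auto intro!: tendsto_intros)
  have m0: "sm d v0 x0 y0 > 0" using V0 by (simp add: sm_def)
  have lsh: "((\<lambda>w. ssh d v0 (x w) (y w)) \<longlongrightarrow> ssh d v0 x0 y0) F"
    unfolding ssh_def using lY lm m0 by (auto intro!: tendsto_intros)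
  have lch: "((\<lambda>w. sch d v0 (x w) (y w)) \<longlongrightarrow> sch d v0 x0 y0) F"
    unfolding sch_def using lsh by (auto intro!: tendsto_intros)
  have ch0: "sch d v0 x0 y0 \<ge> 1" by (simp add: sch_def)
  have sh0: "ssh d v0 x0 y0 > 0" using Y0 m0 by (simp add: ssh_def)
  show "((\<lambda>w. sth d v0 (x w) (y w)) \<longlongrightarrow> sth d v0 x0 y0) F"
    unfolding sth_def using lsh lch ch0 sh0 by (auto intro!: tendsto_intros)
  show "vlim F (\<lambda>w. sa d v0 (x w) (y w)) (sa d v0 x0 y0)"
    unfolding vlim_def sa_def using lx lsv lch lm ch0 m0 unfolding vlim_def by (auto intro!: tendsto_intros)
  show "vlim F (\<lambda>w. sb d (y w)) (sb d y0)"
    unfolding vlim_def sb_def using ly lY Y0 unfolding vlim_def by (auto intro!: tendsto_intros)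
  have e1: "eventually (\<lambda>w. bform d (y w) (y w) > 0) F" using order_tendstoD(1)[OF lY Y0] .
  have e2: "eventually (\<lambda>w. bform d (sv d v0 (x w) (y w)) (sv d v0 (x w) (y w)) < 1) F" using order_tendstoD(2)[OF lV V0] .
  have lO: "((\<lambda>w. (x w d - sv d v0 (x w) (y w) d) * y w 0 - (x w 0 - sv d v0 (x w) (y w) 0) * y w d) \<longlongrightarrow>
      (x0 d - sv d v0 x0 y0 d) * y0 0 - (x0 0 - sv d v0 x0 y0 0) * y0 d) F"
    using lx ly lsv unfolding vlim_def by (auto intro!: tendsto_intros)
  have e3: "eventually (\<lambda>w. (x w d - sv d v0 (x w) (y w) d) * y w 0 - (x w 0 - sv d v0 (x w) (y w) 0) * y w d > 0) F"
    using order_tendstoD(1)[OF lO O0] .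
  show "eventually (\<lambda>w. sD d v0 (x w) (y w)) F"
    using e1 e2 e3 by eventually_elim (simp add: sD_def)
qed

lemma CONT:
  assumes coord: "\<forall>k. vlim F (\<lambda>w. w k) (z k)"
    and base: "\<forall>j\<in>{1..n}. sD d (v0 j) (xR (UU d ini s v0 j z)) (yI (UU d ini s v0 j z))
      \<and> (bform d (sv1 d (v0 j) (yI (UU d ini s v0 j z))) (sv1 d (v0 j) (yI (UU d ini s v0 j z))) \<noteq> 0 \<or> v0 j = (\<lambda>_. 0))"
    and jn: "j \<le> n"
  shows "\<forall>(V :: _ \<Rightarrow> nat \<Rightarrow> complex) V0. vlim F V V0 \<longrightarrow> vlim F (\<lambda>w. Op d ini s v0 j w (V w)) (Op d ini s v0 j z V0)"
  using jn
proof (induction j)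
  case 0 then show ?case by simp
next
  case (Suc j)
  have IH: "vlim F V V0 \<Longrightarrow> vlim F (\<lambda>w. Op d ini s v0 j w (V w)) (Op d ini s v0 j z V0)" for V V0
    using Suc by simp
  have j: "Suc j \<in> {1..n}" using Suc.prems by simp
  have lU: "vlim F (\<lambda>w. UU d ini s v0 (Suc j) w) (UU d ini s v0 (Suc j) z)"
    unfolding UU_def using vlim_pinv[OF IH[OF coord[rule_format]]] by simp
  have lx: "vlim F (\<lambda>w. xR (UU d ini s v0 (Suc j) w)) (xR (UU d ini s v0 (Suc j) z))"
    using lU unfolding vlim_def xR_def by (auto intro!: tendsto_intros)
  have ly: "vlim F (\<lambda>w. yI (UU d ini s v0 (Suc j) w)) (yI (UU d ini s v0 (Suc j) z))"
    using lU unfolding vlim_def yI_def by (auto intro!: tendsto_intros)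
  note B = base[rule_format, OF j]
  note SC = SECCONT[OF conjunct1[OF B] conjunct2[OF B] lx ly]
  have lsg: "((\<lambda>w. - sg d (s (Suc j)) (v0 (Suc j)) (UU d ini s v0 (Suc j) w)) \<longlongrightarrow> - sg d (s (Suc j)) (v0 (Suc j)) (UU d ini s v0 (Suc j) z)) F"
    unfolding sg_def using SC(1) by (auto intro!: tendsto_intros)
  show ?case
  proof (intro allI impI)
    fix V :: "_ \<Rightarrow> nat \<Rightarrow> complex" and V0 assume V: "vlim F V V0"
    show "vlim F (\<lambda>w. Op d ini s v0 (Suc j) w (V w)) (Op d ini s v0 (Suc j) z V0)"
      unfolding Op_Suc Let_def
      by (rule vlim_rot[OF lsg SC(2) SC(3) vlim_pinv[OF IH[OF V]]])
  qed
qed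



lemma coord_lim: "vlim (at z) (\<lambda>w::nat\<Rightarrow>nat\<Rightarrow>complex. w k) (z k)"
  unfolding vlim_def
proof
  fix i
  have "continuous_on UNIV (\<lambda>w::nat\<Rightarrow>nat\<Rightarrow>complex. w k i)"
    using continuous_on_compose2[OF continuous_on_product_coordinates[of i] continuous_on_product_coordinates[of k]] by auto
  then show "((\<lambda>w. w k i) \<longlongrightarrow> z k i) (at z)" by (simp add: continuous_on_def)
qed

theorem lemma10:
  fixes d n :: nat
  assumes "d \<ge> 2" and "n \<ge> 1"
  shows "openin (top_of_set (Xcn d n)) (Tplus d n)"
proof -
  have d2: "d \<ge> 2" by fact
  have d1: "d \<ge> 1" using d2 by simp
  have loc: "\<exists>T. openin (top_of_set (Xcn d n)) T \<and> z \<in> T \<and> T \<subseteq> Tplus d n" if z: "z \<in> Tplus d n" for z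
  proof -
    obtain L c where zX: "z \<in> Xcn d n"
      and Lc: "\<forall>j\<in>{1..n}. L j \<in> G0plus d \<and> c j \<in> Xr d \<and> z j = mapp d (lprod d L j) (cvec (c j))"
      using z unfolding Tplus_def by blast
    have "\<forall>j\<in>{1..n}. \<exists>ps. ps \<noteq> [] \<and> (\<forall>(t, M)\<in>set ps. Im t > 0 \<and> M \<in> Cplus d) \<and> L j = FF d ps (mid d)"
      using Lc unfolding G0plus_def FF_def by blast
    then obtain PS where PS: "\<forall>j\<in>{1..n}. PS j \<noteq> [] \<and> (\<forall>(t, M)\<in>set (PS j). Im t > 0 \<and> M \<in> Cplus d) \<and> L j = FF d (PS j) (mid d)"
      by (metis (no_types, lifting) bchoice)
    define ini where "ini j = butlast (PS j)" for j
    define tau where "tau j = fst (last (PS j))" for j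
    define MM where "MM j = snd (last (PS j))" for j
    have PSdec: "PS j = ini j @ [(tau j, MM j)]" if "j \<in> {1..n}" for j
      using PS that by (simp add: ini_def tau_def MM_def)
    have lastf: "Im (tau j) > 0 \<and> MM j \<in> Cplus d" if j: "j \<in> {1..n}" for j
    proof -
      have mem: "last (PS j) \<in> set (PS j)" using PS j by simp
      have all: "\<forall>(t, M)\<in>set (PS j). 0 < Im t \<and> M \<in> Cplus d" using PS j by blast
      obtain t M where tm: "last (PS j) = (t, M)" by (cases "last (PS j)")
      show ?thesis using bspec[OF all mem] tm by (simp add: tau_def MM_def)
    qed
    have inif: "\<forall>j\<in>{1..n}. \<forall>(t, M)\<in>set (ini j). Im t > 0 \<and> M \<in> Cplus d"
      using PS by (auto simp: ini_def dest: in_set_butlastD)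
    have "\<forall>j\<in>{1..n}. \<exists>r. fst r > 0 \<and> C1c d (fst (snd r)) (snd (snd r)) \<and> MM j = mscale (complex_of_real (fst r)) (ell d (fst (snd r)) (snd (snd r)))"
      using lastf Cplus_E by fastforce
    then obtain R where R: "\<forall>j\<in>{1..n}. fst (R j) > 0 \<and> C1c d (fst (snd (R j))) (snd (snd (R j))) \<and> MM j = mscale (complex_of_real (fst (R j))) (ell d (fst (snd (R j))) (snd (snd (R j))))"
      by (metis (no_types, lifting) bchoice)
    define rho where "rho j = fst (R j)" for j
    define a0 where "a0 j = fst (snd (R j))" for j
    define b0 where "b0 j = snd (snd (R j))" for j
    define sig where "sig j = tau j * complex_of_real (rho j)" for j
    define s where "s = (\<lambda>j. Re (sig j))"
    define v0 where "v0 = (\<lambda>j i. c j i - bform d (a0 j) (c j) * a0 j i - bform d (b0 j) (c j) * b0 j i)"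
    have ab: "\<forall>j\<in>{1..n}. C1c d (a0 j) (b0 j)" using R by (simp add: a0_def b0_def)
    have im: "\<forall>j\<in>{1..n}. Im (sig j) > 0" using R lastf by (simp add: sig_def rho_def)
    have cX: "\<forall>j\<in>{1..n}. c j \<in> Xr d" using Lc by simp
    have zj: "\<forall>j\<in>{1..n}. z j = mapp d (lprod d L j) (cvec (c j))" using Lc by simp
    have iniC: "\<forall>j\<in>{1..n}. \<forall>(t, M) \<in> set (ini j). M \<in> Cplus d" using inif by fastforce
    have Lact: "\<forall>j\<in>{1..n}. \<forall>v\<in>vec_sp d. mapp d (L j) v = mapp d (FF d (ini j) (mid d)) (rot d (sig j) (a0 j) (b0 j) v)"
    proof (intro ballI)
      fix j and v :: "nat \<Rightarrow> complex" assume j: "j \<in> {1..n}" and v: "v \<in> vec_sp d"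
      have abj: "C1c d (a0 j) (b0 j)" using ab j by simp
      have o: "orthon d (a0 j) (b0 j)" and abv: "a0 j \<in> vec_sp d" "b0 j \<in> vec_sp d"
        using abj by (auto simp: C1c_def orthon_def)
      have MMj: "MM j = mscale (complex_of_real (rho j)) (ell d (a0 j) (b0 j))"
        using R j by (simp add: rho_def a0_def b0_def)
      have "mapp d (L j) v = mapp d (FF d (ini j) (mid d)) (mapp d (mexp d (mscale (tau j) (MM j))) v)"
        using PS j FF_snoc[OF v] PSdec[OF j] by simp
      also have "mexp d (mscale (tau j) (MM j)) = mexp d (mscale (sig j) (ell d (a0 j) (b0 j)))"
        by (simp add: MMj mscale_mscale sig_def)
      finally show "mapp d (L j) v = mapp d (FF d (ini j) (mid d)) (rot d (sig j) (a0 j) (b0 j) v)"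
        using mapp_rot[OF d1 o abv v] by simp
    qed
    note BZ = BASEZ[OF d2 iniC ab im cX Lact zj s_def v0_def]
    have base: "\<forall>j\<in>{1..n}. sD d (v0 j) (xR (UU d ini s v0 j z)) (yI (UU d ini s v0 j z))
      \<and> (bform d (sv1 d (v0 j) (yI (UU d ini s v0 j z))) (sv1 d (v0 j) (yI (UU d ini s v0 j z))) \<noteq> 0 \<or> v0 j = (\<lambda>_. 0))"
      using BZ by blast
    have coord: "\<forall>k. vlim (at z) (\<lambda>w. w k) (z k)" using coord_lim by blast
    have ev: "eventually (\<lambda>w. sD d (v0 j) (xR (UU d ini s v0 j w)) (yI (UU d ini s v0 j w))) (at z)"
      if j: "j \<in> {1..n}" for j
    proof -
      have "j - 1 \<le> n" using j by auto
      note C = CONT[OF coord base this, rule_format, OF coord[rule_format, of j]]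
      have lU: "vlim (at z) (\<lambda>w. UU d ini s v0 j w) (UU d ini s v0 j z)"
        unfolding UU_def by (rule vlim_pinv[OF C])
      have lx: "vlim (at z) (\<lambda>w. xR (UU d ini s v0 j w)) (xR (UU d ini s v0 j z))"
        using lU unfolding vlim_def xR_def by (auto intro!: tendsto_intros)
      have ly: "vlim (at z) (\<lambda>w. yI (UU d ini s v0 j w)) (yI (UU d ini s v0 j z))"
        using lU unfolding vlim_def yI_def by (auto intro!: tendsto_intros)
      note B = base[rule_format, OF j]
      show ?thesis by (rule SECCONT(4)[OF conjunct1[OF B] conjunct2[OF B] lx ly])
    qed
    have "eventually (\<lambda>w. \<forall>j\<in>{1..n}. sD d (v0 j) (xR (UU d ini s v0 j w)) (yI (UU d ini s v0 j w))) (at z)"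
      using ev by (intro eventually_ball_finite) auto
    then obtain S where S: "open S" "z \<in> S"
      and SP: "\<forall>w\<in>S. w \<noteq> z \<longrightarrow> (\<forall>j\<in>{1..n}. sD d (v0 j) (xR (UU d ini s v0 j w)) (yI (UU d ini s v0 j w)))"
      unfolding eventually_at_topological by blast
    have v0v: "\<forall>j\<in>{1..n}. v0 j \<in> vec_sp d"
      using ab cX by (auto simp: v0_def C1c_def Xr_def vec_sp_def)
    have "Xcn d n \<inter> S \<subseteq> Tplus d n"
    proof
      fix w assume w: "w \<in> Xcn d n \<inter> S"
      show "w \<in> Tplus d n"
      proof (cases "w = z")
        case True then show ?thesis using z by simp
      next
        case False
        then show ?thesis using GOOD[OF d2 inif v0v _ ] w SP by blast
      qed
    qed
    then show ?thesis using S zX by (intro exI[of _ "Xcn d n \<inter> S"]) (auto intro: openin_open_Int)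
  qed
  show ?thesis by (subst openin_subopen) (use loc in blast)
qed

end
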